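(* Let $s\le0$. There exists $C>0$ (depending only on $s$) such that for all $R>0$, all $2\le A\le N$, all $t\ge0$, with $\phi$ defined by $\widehat\phi=R(\mathbf 1_{N+I_A}+\mathbf 1_{2N+I_A})$: $$\|U_1[\phi](t)\|_{H^s}\le CRA^{1/2}N^s,$$ and for all $k\ge2$, $$\|U_k[\phi](t)\|_{H^s}\le t^{\frac{k-1}{2}}(CRA)^{k-1}R\,g(A),$$ where $g(A)=A^{s+1/2}$ if $-\frac12<s\le0$, $g(A)=(\log A)^{1/2}$ if $s=-\frac12$, and $g(A)=1$ if $s<-\frac12$.
   Context: $I_A=[-\frac A2,\frac A2)$; $\widehat f(\xi)=\int e^{-ix\xi}f(x)dx$; $\|f\|_{H^s}=\frac1{\sqrt{2\pi}}(\int\langle\xi\rangle^{2s}|\widehat f|^2d\xi)^{1/2}$; $|D|$ is the Fourier multiplier with symbol $|\xi|$; $\mu\in\{-1,1\}$. $U_1[\phi](t)=e^{-it|D|}\phi$ and for $k\ge2$, $U_k[\phi](t)=-i\mu\sum_{k_1+k_2+k_3=k,\ k_i\ge1}\int_0^te^{-i(t-\tau)|D|}(U_{k_1}[\phi]\overline{U_{k_2}[\phi]}U_{k_3}[\phi])(\tau)d\tau$. *)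

theory Defs
  imports "HOL-Analysis.Analysis"
begin

definition ft :: "(real \<Rightarrow> complex) \<Rightarrow> real \<Rightarrow> complex" where
  "ft f \<xi> = (LINT x|lborel. cis (- (x * \<xi>)) * f x)"

definition ift :: "(real \<Rightarrow> complex) \<Rightarrow> real \<Rightarrow> complex" where
  "ift F x = complex_of_real (1 / (2 * pi)) * (LINT \<xi>|lborel. cis (x * \<xi>) * F \<xi>)"

text \<open>H^s membership and norm of the function whose Fourier transform is F:
  ||f||_{H^s} = (2 pi)^(-1/2) (int <xi>^(2s) |hat f|^2)^(1/2), with <xi> = sqrt(1+xi^2).\<close>
definition in_Hs_hat :: "real \<Rightarrow> (real \<Rightarrow> complex) \<Rightarrow> bool" where
  "in_Hs_hat s F \<longleftrightarrow> F \<in> borel_measurable lborel \<and>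
     integrable lborel (\<lambda>\<xi>. (sqrt (1 + \<xi>\<^sup>2)) powr (2 * s) * (cmod (F \<xi>))\<^sup>2)"

definition Hs_norm_hat :: "real \<Rightarrow> (real \<Rightarrow> complex) \<Rightarrow> real" where
  "Hs_norm_hat s F = (1 / sqrt (2 * pi)) *
     sqrt (LINT \<xi>|lborel. (sqrt (1 + \<xi>\<^sup>2)) powr (2 * s) * (cmod (F \<xi>))\<^sup>2)"

text \<open>Fourier transform of the Picard iterates U_k[phi](t), given the Fourier transform
  phih of phi.  U_1[phi](t) = e^(-it|D|) phi, and for k >= 2 the Duhamel formula
  U_k(t) = -i mu sum_{k1+k2+k3=k, ki>=1} int_0^t e^(-i(t-tau)|D|)(U_k1 conj(U_k2) U_k3)(tau) dtau,
  written on the Fourier side (the multiplier e^(-i(t-tau)|D|) acts as multiplication by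
  e^(-i(t-tau)|xi|); the physical-space iterates are ift of these).\<close>
function Uhat :: "real \<Rightarrow> (real \<Rightarrow> complex) \<Rightarrow> nat \<Rightarrow> real \<Rightarrow> real \<Rightarrow> complex" where
  "Uhat \<mu> phih k t \<xi> =
    (if k = 0 then 0
     else if k = 1 then cis (- (t * \<bar>\<xi>\<bar>)) * phih \<xi>
     else - \<i> * complex_of_real \<mu> *
       (\<Sum>(k1, k2, k3) \<in> {(a, b, c). a + b + c = k \<and> 1 \<le> a \<and> 1 \<le> b \<and> 1 \<le> c}.
          LINT \<tau>:{0..t}|lborel. cis (- ((t - \<tau>) * \<bar>\<xi>\<bar>)) *
            ft (\<lambda>x. ift (Uhat \<mu> phih k1 \<tau>) x * cnj (ift (Uhat \<mu> phih k2 \<tau>) x)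
                     * ift (Uhat \<mu> phih k3 \<tau>) x) \<xi>))"
  by pat_completeness auto
termination
  by (relation "Wellfounded.measure (\<lambda>(\<mu>, phih, k, t, \<xi>). k)") auto

definition U :: "real \<Rightarrow> (real \<Rightarrow> complex) \<Rightarrow> nat \<Rightarrow> real \<Rightarrow> real \<Rightarrow> complex" where
  "U \<mu> phih k t = ift (Uhat \<mu> phih k t)"

definition phi_hat :: "real \<Rightarrow> real \<Rightarrow> real \<Rightarrow> real \<Rightarrow> complex" where
  "phi_hat R N A \<xi> = complex_of_real (R * (indicator {N - A/2 ..< N + A/2} \<xi>
                                        + indicator {2*N - A/2 ..< 2*N + A/2} \<xi>))"

definition gA :: "real \<Rightarrow> real \<Rightarrow> real" where
  "gA s A = (if s > -1/2 then A powr (s + 1/2)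
             else if s = -1/2 then (ln A) powr (1/2) else 1)"

end

theory Submission
  imports Defs "HOL-Probability.Probability"
begin


definition gw :: "real \<Rightarrow> real \<Rightarrow> real" where
  "gw \<sigma> x = exp (- ((x / \<sigma>)\<^sup>2) / 2)"
definition gk :: "real \<Rightarrow> real \<Rightarrow> real" where
  "gk \<sigma> y = \<sigma> * sqrt (2 * pi) * exp (- ((\<sigma> * y)\<^sup>2) / 2)"

lemma cis_meas[measurable]: "cis \<in> borel_measurable borel"
  by (intro borel_measurable_continuous_onI continuous_intros)

lemma gw_meas[measurable]: "gw \<sigma> \<in> borel_measurable borel"
  unfolding gw_def by measurable
lemma gk_meas[measurable]: "gk \<sigma> \<in> borel_measurable borel"
  unfolding gk_def by measurable

lemma gw_as_density: "\<sigma> > 0 \<Longrightarrow> gw \<sigma> (\<sigma> * u) = sqrt (2*pi) * std_normal_density u"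
  unfolding gw_def std_normal_density_def by (simp add: power_mult_distrib)
lemma gw_as_density': "\<sigma> > 0 \<Longrightarrow> gw \<sigma> (u * \<sigma>) = sqrt (2*pi) * std_normal_density u"
  using gw_as_density[of \<sigma> u] by (simp add: mult.commute)

lemma ft_gw:
  assumes s: "\<sigma> > 0"
  shows "ft (\<lambda>x. complex_of_real (gw \<sigma> x)) y = complex_of_real (gk \<sigma> y)"
proof -
  have "ft (\<lambda>x. complex_of_real (gw \<sigma> x)) y
      = (LINT x|lborel. cis (- (x * y)) * complex_of_real (gw \<sigma> x))" by (simp add: ft_def)
  also have "\<dots> = \<bar>\<sigma>\<bar> *\<^sub>R (LINT u|lborel. cis (- ((0 + \<sigma> * u) * y)) * complex_of_real (gw \<sigma> (0 + \<sigma> * u)))"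
    using s by (intro lborel_integral_real_affine) simp
  also have "(\<lambda>u. cis (- ((0 + \<sigma> * u) * y)) * complex_of_real (gw \<sigma> (0 + \<sigma> * u)))
      = (\<lambda>u. complex_of_real (sqrt (2*pi)) * (std_normal_density u *\<^sub>R iexp ((- \<sigma> * y) * u)))"
    using s by (auto simp: gw_as_density' cis_conv_exp scaleR_conv_of_real algebra_simps)
  also have "(LINT u|lborel. complex_of_real (sqrt (2*pi)) * (std_normal_density u *\<^sub>R iexp ((- \<sigma> * y) * u)))
      = complex_of_real (sqrt (2*pi)) * (LINT u|lborel. std_normal_density u *\<^sub>R iexp ((- \<sigma> * y) * u))"
    by (rule integral_mult_right_zero)
  also have "(LINT u|lborel. std_normal_density u *\<^sub>R iexp ((- \<sigma> * y) * u)) = char std_normal_distribution (- \<sigma> * y)"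
    unfolding char_def by (subst integral_density) auto
  also have "\<dots> = exp (- ((\<sigma> * y)^2) / 2)"
    by (simp add: char_std_normal_distribution power_mult_distrib)
  finally show ?thesis using s by (simp add: gk_def scaleR_conv_of_real)
qed


lemma integrable_sep:
  fixes f g :: "real \<Rightarrow> complex"
  assumes f: "integrable lborel f" and g: "integrable lborel g"
  shows "integrable (lborel \<Otimes>\<^sub>M lborel) (\<lambda>p. f (fst p) * g (snd p))"
proof -
  have [measurable]: "f \<in> borel_measurable borel" "g \<in> borel_measurable borel"
    using f g by auto
  show ?thesis
  proof (rule lborel_pair.Fubini_integrable)
    show "(\<lambda>p. f (fst p) * g (snd p)) \<in> borel_measurable (lborel \<Otimes>\<^sub>M lborel)" by measurable
    have "(\<lambda>x. \<integral>y. norm (f (fst (x, y)) * g (snd (x, y))) \<partial>lborel) = (\<lambda>x. norm (f x) * (\<integral>y. norm (g y) \<partial>lborel))"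
      by (simp add: norm_mult)
    then show "integrable lborel (\<lambda>x. \<integral>y. norm (f (fst (x, y)) * g (snd (x, y))) \<partial>lborel)"
      using f by (simp add: integrable_norm)
    show "AE x in lborel. integrable lborel (\<lambda>y. f (fst (x, y)) * g (snd (x, y)))"
      using g by simp
  qed
qed

lemma conv_L:
  fixes F u :: "real \<Rightarrow> complex"
  assumes F: "integrable lborel F" and u: "integrable lborel u"
  shows "ft (\<lambda>x. ift F x * u x) \<xi> = complex_of_real (1/(2*pi)) * (\<integral>a. F a * ft u (\<xi> - a) \<partial>lborel)"
proof -
  have [measurable]: "F \<in> borel_measurable borel" "u \<in> borel_measurable borel"
    using F u by auto
  define h where "h x a = complex_of_real (1/(2*pi)) * (cis (- (x * (\<xi> - a))) * F a * u x)" for x a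
  have hm[measurable]: "case_prod h \<in> borel_measurable (lborel \<Otimes>\<^sub>M lborel)"
    unfolding h_def by measurable
  have int: "integrable (lborel \<Otimes>\<^sub>M lborel) (case_prod h)"
  proof (rule Bochner_Integration.integrable_bound)
    show "integrable (lborel \<Otimes>\<^sub>M lborel) (\<lambda>p. complex_of_real (1/(2*pi)) * (u (fst p) * F (snd p)))"
      using integrable_sep[OF u F] by simp
    show "case_prod h \<in> borel_measurable (lborel \<Otimes>\<^sub>M lborel)" by (rule hm)
    show "AE p in lborel \<Otimes>\<^sub>M lborel. norm (case_prod h p) \<le> norm (complex_of_real (1/(2*pi)) * (u (fst p) * F (snd p)))"
      by (intro AE_I2) (auto simp: h_def norm_mult norm_divide mult.commute split: prod.splits)
  qed
  have "ft (\<lambda>x. ift F x * u x) \<xi> = (\<integral>x. (\<integral>a. h x a \<partial>lborel) \<partial>lborel)"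
    unfolding ft_def ift_def h_def
    apply (rule Bochner_Integration.integral_cong[OF refl])
    apply (subst integral_mult_right_zero[symmetric])
    apply (subst integral_mult_left_zero[symmetric])
    apply (subst integral_mult_right_zero[symmetric])
    apply (rule Bochner_Integration.integral_cong[OF refl])
    apply (simp add: cis_mult algebra_simps)
    done
  also have "\<dots> = (\<integral>a. (\<integral>x. h x a \<partial>lborel) \<partial>lborel)"
    using lborel_pair.Fubini_integral[OF int] by simp
  also have "\<dots> = (\<integral>a. complex_of_real (1/(2*pi)) * (F a * ft u (\<xi> - a)) \<partial>lborel)"
    unfolding h_def ft_def
    apply (rule Bochner_Integration.integral_cong[OF refl])
    apply (subst integral_mult_right_zero[symmetric])
    apply (subst integral_mult_right_zero[symmetric])
    apply (rule Bochner_Integration.integral_cong[OF refl])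
    apply (simp add: algebra_simps)
    done
  also have "\<dots> = complex_of_real (1/(2*pi)) * (\<integral>a. F a * ft u (\<xi> - a) \<partial>lborel)"
    by (rule integral_mult_right_zero)
  finally show ?thesis .
qed


lemma gw_normal: "\<sigma> > 0 \<Longrightarrow> gw \<sigma> x = sqrt (2*pi*\<sigma>\<^sup>2) * normal_density 0 \<sigma> x"
  unfolding gw_def normal_density_def by (simp add: power_divide)

lemma gw_integrable: "\<sigma> > 0 \<Longrightarrow> integrable lborel (gw \<sigma>)"
proof -
  assume s: "\<sigma> > 0"
  have "integrable lborel (\<lambda>x. sqrt (2*pi*\<sigma>\<^sup>2) * normal_density 0 \<sigma> x)"
    using s by (intro integrable_mult_right integrable_normal_density)
  moreover have "gw \<sigma> = (\<lambda>x. sqrt (2*pi*\<sigma>\<^sup>2) * normal_density 0 \<sigma> x)"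
    using s by (simp add: fun_eq_iff gw_normal)
  ultimately show ?thesis by simp
qed

lemma gw_nonneg: "0 \<le> gw \<sigma> x" unfolding gw_def by simp
lemma gw_le1: "gw \<sigma> x \<le> 1" unfolding gw_def by simp

lemma gk_normal: "\<sigma> > 0 \<Longrightarrow> gk \<sigma> (t - a) = 2 * pi * normal_density t (1/\<sigma>) a"
proof -
  assume s: "\<sigma> > 0"
  have "sqrt (2 * pi * (1/\<sigma>)\<^sup>2) = sqrt (2*pi) / \<sigma>"
    using s by (simp add: real_sqrt_mult real_sqrt_divide power_divide)
  moreover have "(a - t)\<^sup>2 / (2 * (1 / \<sigma>)\<^sup>2) = (\<sigma> * (t - a))\<^sup>2 / 2"
    using s by (simp add: power_divide power_mult_distrib power2_commute)
  moreover have "2 * pi * (\<sigma> / sqrt (2 * pi)) = \<sigma> * sqrt (2*pi)"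
  proof -
    have "2 * pi = sqrt (2*pi) * sqrt (2*pi)" by simp
    then show ?thesis by (simp add: field_simps)
  qed
  ultimately show ?thesis unfolding gk_def normal_density_def
    by (simp add: field_simps)
qed

lemma gk_nonneg: "\<sigma> > 0 \<Longrightarrow> 0 \<le> gk \<sigma> y" unfolding gk_def by simp

lemma gk_nn_integral: "\<sigma> > 0 \<Longrightarrow> (\<integral>\<^sup>+a. ennreal (gk \<sigma> (t - a)) \<partial>lborel) = ennreal (2*pi)"
proof -
  assume s: "\<sigma> > 0"
  have "(\<integral>\<^sup>+a. ennreal (gk \<sigma> (t - a)) \<partial>lborel) = (\<integral>\<^sup>+a. ennreal (2*pi * normal_density t (1/\<sigma>) a) \<partial>lborel)"
    using s by (simp add: gk_normal)
  also have "\<dots> = ennreal (\<integral>a. 2*pi * normal_density t (1/\<sigma>) a \<partial>lborel)"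
    using s by (intro nn_integral_eq_integral integrable_mult_right integrable_normal_density AE_I2) auto
  also have "\<dots> = ennreal (2*pi)"
  proof -
    have "0 < 1/\<sigma>" using s by simp
    then show ?thesis by (simp add: integral_normal_density)
  qed
  finally show ?thesis .
qed

lemma gk_decay: "\<sigma> > 0 \<Longrightarrow> \<delta> \<le> \<bar>y\<bar> \<Longrightarrow> 0 \<le> \<delta> \<Longrightarrow> gk \<sigma> y \<le> \<sigma> * sqrt (2*pi) * exp (- ((\<sigma> * \<delta>)\<^sup>2) / 2)"
proof -
  assume s: "\<sigma> > 0" and d: "\<delta> \<le> \<bar>y\<bar>" "0 \<le> \<delta>"
  have "\<delta>\<^sup>2 \<le> \<bar>y\<bar>\<^sup>2" using d by (intro power_mono) auto
  then have "\<delta>\<^sup>2 \<le> y\<^sup>2" by simp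
  then have "(\<sigma> * \<delta>)\<^sup>2 \<le> (\<sigma> * y)\<^sup>2" using s by (simp add: power_mult_distrib)
  then have "exp (- ((\<sigma> * y)\<^sup>2) / 2) \<le> exp (- ((\<sigma> * \<delta>)\<^sup>2) / 2)" by simp
  then show ?thesis unfolding gk_def using s by (intro mult_left_mono) auto
qed

lemma gk_decay_lim: "\<delta> > 0 \<Longrightarrow> (\<lambda>n. (real n + 1) * sqrt (2*pi) * exp (- (((real n + 1) * \<delta>)\<^sup>2) / 2)) \<longlonglongrightarrow> 0"
  by real_asymp

lemma gw_lim: "(\<lambda>n. gw (real n + 1) x) \<longlonglongrightarrow> 1"
proof -
  have "(\<lambda>n. x / (real n + 1)) \<longlonglongrightarrow> 0" by real_asymp
  then have "(\<lambda>n. (x / (real n + 1))\<^sup>2) \<longlonglongrightarrow> 0\<^sup>2" by (rule tendsto_power)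
  then have "(\<lambda>n. - ((x / (real n + 1))\<^sup>2) / 2) \<longlonglongrightarrow> - (0\<^sup>2) / 2"
    by (intro tendsto_divide tendsto_minus tendsto_const) auto
  then have "(\<lambda>n. exp (- ((x / (real n + 1))\<^sup>2) / 2)) \<longlonglongrightarrow> exp (- (0\<^sup>2) / 2)"
    by (rule tendsto_exp)
  then show ?thesis unfolding gw_def by simp
qed


abbreviation c0 :: real where "c0 \<equiv> 1 / (2 * pi)"

lemma cnj_meas[measurable]: "cnj \<in> borel_measurable borel"
  by (intro borel_measurable_continuous_onI continuous_intros)

lemma ift_meas[measurable]:
  assumes [measurable]: "F \<in> borel_measurable borel" shows "ift F \<in> borel_measurable borel"
  unfolding ift_def by measurable

lemma norm_integral_le_nn: "ennreal (norm (integral\<^sup>L M f)) \<le> (\<integral>\<^sup>+x. norm (f x) \<partial>M)"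
  by (cases "integrable M f") (auto simp: integral_norm_bound_ennreal not_integrable_integral_eq)

lemma ift_bound: "norm (ift F x) \<le> c0 * (\<integral>a. norm (F a) \<partial>lborel)"
proof -
  have "norm (ift F x) = c0 * norm (LINT a|lborel. cis (x * a) * F a)"
    by (simp add: ift_def norm_mult norm_divide)
  also have "norm (LINT a|lborel. cis (x * a) * F a) \<le> (\<integral>a. norm (cis (x * a) * F a) \<partial>lborel)"
    by (rule integral_norm_bound)
  also have "\<dots> = (\<integral>a. norm (F a) \<partial>lborel)" by (simp add: norm_mult)
  finally show ?thesis by (simp add: divide_right_mono)
qed

lemma cnj_ift: "cnj (ift G x) = complex_of_real c0 * (LINT b|lborel. cis (- (x * b)) * cnj (G b))"
proof -
  have "cnj (LINT b|lborel. cis (x*b) * G b) = (LINT b|lborel. cnj (cis (x*b) * G b))"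
    by (rule Bochner_Integration.integral_cnj[symmetric])
  also have "\<dots> = (LINT b|lborel. cis (- (x * b)) * cnj (G b))" by (simp add: cis_cnj)
  finally show ?thesis by (simp add: ift_def)
qed

lemma conv_Lc:
  fixes G v :: "real \<Rightarrow> complex"
  assumes G: "integrable lborel G" and v: "integrable lborel v"
  shows "ft (\<lambda>x. cnj (ift G x) * v x) \<eta> = complex_of_real c0 * (\<integral>b. cnj (G b) * ft v (\<eta> + b) \<partial>lborel)"
proof -
  have [measurable]: "G \<in> borel_measurable borel" "v \<in> borel_measurable borel"
    using G v by auto
  define h where "h x b = complex_of_real c0 * (cis (- (x * (\<eta> + b))) * cnj (G b) * v x)" for x b
  have hm[measurable]: "case_prod h \<in> borel_measurable (lborel \<Otimes>\<^sub>M lborel)"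
    unfolding h_def by measurable
  have Gc: "integrable lborel (\<lambda>b. cnj (G b))" using G by simp
  have int: "integrable (lborel \<Otimes>\<^sub>M lborel) (case_prod h)"
  proof (rule Bochner_Integration.integrable_bound)
    show "integrable (lborel \<Otimes>\<^sub>M lborel) (\<lambda>p. complex_of_real c0 * (v (fst p) * cnj (G (snd p))))"
      using integrable_sep[OF v Gc] by simp
    show "case_prod h \<in> borel_measurable (lborel \<Otimes>\<^sub>M lborel)" by (rule hm)
    show "AE p in lborel \<Otimes>\<^sub>M lborel. norm (case_prod h p) \<le> norm (complex_of_real c0 * (v (fst p) * cnj (G (snd p))))"
      by (intro AE_I2) (auto simp: h_def norm_mult norm_divide mult.commute split: prod.splits)
  qed
  have "ft (\<lambda>x. cnj (ift G x) * v x) \<eta> = (\<integral>x. (\<integral>b. h x b \<partial>lborel) \<partial>lborel)"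
    unfolding ft_def cnj_ift h_def
    apply (rule Bochner_Integration.integral_cong[OF refl])
    apply (subst integral_mult_right_zero[symmetric])
    apply (subst integral_mult_left_zero[symmetric])
    apply (subst integral_mult_right_zero[symmetric])
    apply (rule Bochner_Integration.integral_cong[OF refl])
    apply (simp add: cis_mult algebra_simps cis_cnj)
    done
  also have "\<dots> = (\<integral>b. (\<integral>x. h x b \<partial>lborel) \<partial>lborel)"
    using lborel_pair.Fubini_integral[OF int] by simp
  also have "\<dots> = (\<integral>b. complex_of_real c0 * (cnj (G b) * ft v (\<eta> + b)) \<partial>lborel)"
    unfolding h_def ft_def
    apply (rule Bochner_Integration.integral_cong[OF refl])
    apply (subst integral_mult_right_zero[symmetric])
    apply (subst integral_mult_right_zero[symmetric])
    apply (rule Bochner_Integration.integral_cong[OF refl])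
    apply (simp add: algebra_simps)
    done
  also have "\<dots> = complex_of_real c0 * (\<integral>b. cnj (G b) * ft v (\<eta> + b) \<partial>lborel)"
    by (rule integral_mult_right_zero)
  finally show ?thesis .
qed

lemma integrable_bounded_mult:
  fixes f g :: "real \<Rightarrow> complex"
  assumes "integrable lborel g" "f \<in> borel_measurable borel" "\<And>x. norm (f x) \<le> B"
  shows "integrable lborel (\<lambda>x. f x * g x)"
proof (rule Bochner_Integration.integrable_bound)
  show "integrable lborel (\<lambda>x. complex_of_real B * g x)" using assms(1) by simp
  show "(\<lambda>x. f x * g x) \<in> borel_measurable lborel" using assms by auto
  have "0 \<le> B" using assms(3)[of 0] norm_ge_zero order.trans by blast
  then show "AE x in lborel. norm (f x * g x) \<le> norm (complex_of_real B * g x)"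
    using assms(3) by (intro AE_I2) (auto simp: norm_mult intro!: mult_right_mono)
qed

lemma reg_identity:
  fixes F G H :: "real \<Rightarrow> complex"
  assumes F: "integrable lborel F" and G: "integrable lborel G" and H: "integrable lborel H"
    and s: "\<sigma> > 0"
  shows "ft (\<lambda>x. complex_of_real (gw \<sigma> x) * (ift F x * cnj (ift G x) * ift H x)) \<xi>
    = complex_of_real c0 * (\<integral>c. H c * (complex_of_real c0 * (\<integral>b. cnj (G b) *
        (complex_of_real c0 * (\<integral>a. F a * complex_of_real (gk \<sigma> (\<xi> - c + b - a)) \<partial>lborel)) \<partial>lborel)) \<partial>lborel)"
proof -
  have [measurable]: "F \<in> borel_measurable borel" "G \<in> borel_measurable borel" "H \<in> borel_measurable borel"
    using F G H by auto
  define v where "v x = ift F x * complex_of_real (gw \<sigma> x)" for x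
  define u where "u x = cnj (ift G x) * v x" for x
  have gwi: "integrable lborel (\<lambda>x. complex_of_real (gw \<sigma> x))" using gw_integrable[OF s] by simp
  have vi: "integrable lborel v" unfolding v_def
    by (rule integrable_bounded_mult[OF gwi]) (auto intro: ift_bound)
  have ui: "integrable lborel u" unfolding u_def
    by (rule integrable_bounded_mult[OF vi]) (auto intro: ift_bound)
  have ftv: "ft v \<zeta> = complex_of_real c0 * (\<integral>a. F a * complex_of_real (gk \<sigma> (\<zeta> - a)) \<partial>lborel)" for \<zeta>
    unfolding v_def using conv_L[OF F gwi, of \<zeta>] by (simp add: ft_gw[OF s])
  have ftu: "ft u \<eta> = complex_of_real c0 * (\<integral>b. cnj (G b) * ft v (\<eta> + b) \<partial>lborel)" for \<eta>
    unfolding u_def by (rule conv_Lc[OF G vi])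
  have "(\<lambda>x. complex_of_real (gw \<sigma> x) * (ift F x * cnj (ift G x) * ift H x)) = (\<lambda>x. ift H x * u x)"
    by (auto simp: u_def v_def fun_eq_iff)
  then have "ft (\<lambda>x. complex_of_real (gw \<sigma> x) * (ift F x * cnj (ift G x) * ift H x)) \<xi>
      = complex_of_real c0 * (\<integral>c. H c * ft u (\<xi> - c) \<partial>lborel)"
    using conv_L[OF H ui, of \<xi>] by simp
  also have "\<dots> = complex_of_real c0 * (\<integral>c. H c * (complex_of_real c0 * (\<integral>b. cnj (G b) *
        (complex_of_real c0 * (\<integral>a. F a * complex_of_real (gk \<sigma> (\<xi> - c + b - a)) \<partial>lborel)) \<partial>lborel)) \<partial>lborel)"
    by (simp add: ftu ftv)
  finally show ?thesis .
qed


lemma shift_nn: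
  fixes Q :: "real \<Rightarrow> ennreal"
  assumes [measurable]: "Q \<in> borel_measurable borel"
  shows "(\<integral>\<^sup>+x. Q (x + t) \<partial>lborel) = (\<integral>\<^sup>+x. Q x \<partial>lborel)"
  using nn_integral_real_affine[of Q 1 t] by (simp add: add.commute)

lemma conv_nn:
  fixes h Q :: "real \<Rightarrow> ennreal"
  assumes [measurable]: "h \<in> borel_measurable borel" "Q \<in> borel_measurable borel"
  shows "(\<integral>\<^sup>+\<xi>. (\<integral>\<^sup>+c. h c * Q (\<xi> + t * c) \<partial>lborel) \<partial>lborel) = (\<integral>\<^sup>+c. h c \<partial>lborel) * (\<integral>\<^sup>+y. Q y \<partial>lborel)"
proof -
  have "(\<integral>\<^sup>+\<xi>. (\<integral>\<^sup>+c. h c * Q (\<xi> + t * c) \<partial>lborel) \<partial>lborel) = (\<integral>\<^sup>+c. (\<integral>\<^sup>+\<xi>. h c * Q (\<xi> + t * c) \<partial>lborel) \<partial>lborel)"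
    by (rule lborel_pair.Fubini') measurable
  also have "\<dots> = (\<integral>\<^sup>+c. h c * (\<integral>\<^sup>+\<xi>. Q (\<xi> + t * c) \<partial>lborel) \<partial>lborel)"
    by (subst nn_integral_cmult) auto
  also have "\<dots> = (\<integral>\<^sup>+c. h c * (\<integral>\<^sup>+y. Q y \<partial>lborel) \<partial>lborel)"
    by (simp add: shift_nn)
  also have "\<dots> = (\<integral>\<^sup>+c. h c \<partial>lborel) * (\<integral>\<^sup>+y. Q y \<partial>lborel)"
    by (rule nn_integral_multc) auto
  finally show ?thesis .
qed

definition J1 :: "(real \<Rightarrow> complex) \<Rightarrow> real \<Rightarrow> real \<Rightarrow> ennreal" where
  "J1 F \<sigma> \<zeta> = (\<integral>\<^sup>+a. ennreal (norm (F a)) * ennreal (gk \<sigma> (\<zeta> - a)) \<partial>lborel)"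
definition J2 :: "(real \<Rightarrow> complex) \<Rightarrow> (real \<Rightarrow> complex) \<Rightarrow> real \<Rightarrow> real \<Rightarrow> ennreal" where
  "J2 F G \<sigma> \<eta> = (\<integral>\<^sup>+b. ennreal (norm (G b)) * J1 F \<sigma> (\<eta> + b) \<partial>lborel)"
definition J3 :: "(real \<Rightarrow> complex) \<Rightarrow> (real \<Rightarrow> complex) \<Rightarrow> (real \<Rightarrow> complex) \<Rightarrow> real \<Rightarrow> real \<Rightarrow> ennreal" where
  "J3 F G H \<sigma> \<xi> = (\<integral>\<^sup>+c. ennreal (norm (H c)) * J2 F G \<sigma> (\<xi> - c) \<partial>lborel)"

lemma J1_meas[measurable]:
  assumes [measurable]: "F \<in> borel_measurable borel" shows "J1 F \<sigma> \<in> borel_measurable borel"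
  unfolding J1_def by measurable
lemma J2_meas[measurable]:
  assumes [measurable]: "F \<in> borel_measurable borel" "G \<in> borel_measurable borel"
  shows "J2 F G \<sigma> \<in> borel_measurable borel"
  unfolding J2_def by measurable
lemma J3_meas[measurable]:
  assumes [measurable]: "F \<in> borel_measurable borel" "G \<in> borel_measurable borel" "H \<in> borel_measurable borel"
  shows "J3 F G H \<sigma> \<in> borel_measurable borel"
  unfolding J3_def by measurable


lemma ennreal_norm_c0: "ennreal (norm (complex_of_real c0 * z)) = ennreal c0 * ennreal (norm z)"
proof -
  have "norm (complex_of_real c0 * z) = c0 * norm z" by (subst norm_mult) (simp add: norm_divide)
  moreover have "ennreal (c0 * norm z) = ennreal c0 * ennreal (norm z)" by (rule ennreal_mult) auto
  ultimately show ?thesis by metis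
qed

lemma bound_level:
  fixes K :: "real \<Rightarrow> complex" and B :: "real \<Rightarrow> ennreal"
  assumes "\<And>a. ennreal (norm (K a)) \<le> B a"
  shows "ennreal (norm (complex_of_real c0 * (\<integral>a. F a * K a \<partial>lborel)))
     \<le> ennreal c0 * (\<integral>\<^sup>+a. ennreal (norm (F a)) * B a \<partial>lborel)"
proof -
  have "ennreal (norm (\<integral>a. F a * K a \<partial>lborel)) \<le> (\<integral>\<^sup>+a. ennreal (norm (F a * K a)) \<partial>lborel)"
    by (rule norm_integral_le_nn)
  also have "\<dots> \<le> (\<integral>\<^sup>+a. ennreal (norm (F a)) * B a \<partial>lborel)"
    by (intro nn_integral_mono) (simp add: norm_mult ennreal_mult mult_left_mono assms)
  finally show ?thesis unfolding ennreal_norm_c0 by (intro mult_left_mono) auto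
qed

lemma reg_bound:
  assumes s: "\<sigma> > 0" and [measurable]: "F \<in> borel_measurable borel" "G \<in> borel_measurable borel" "H \<in> borel_measurable borel"
  shows "ennreal (norm (complex_of_real c0 * (\<integral>c. H c * (complex_of_real c0 * (\<integral>b. cnj (G b) *
        (complex_of_real c0 * (\<integral>a. F a * complex_of_real (gk \<sigma> (\<xi> - c + b - a)) \<partial>lborel)) \<partial>lborel)) \<partial>lborel)))
     \<le> ennreal c0 * (ennreal c0 * (ennreal c0 * J3 F G H \<sigma> \<xi>))"
proof -
  have l1: "ennreal (norm (complex_of_real c0 * (\<integral>a. F a * complex_of_real (gk \<sigma> (\<zeta> - a)) \<partial>lborel)))
     \<le> ennreal c0 * J1 F \<sigma> \<zeta>" for \<zeta>
    unfolding J1_def by (rule bound_level) (use s gk_nonneg in auto)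
  have l2: "ennreal (norm (complex_of_real c0 * (\<integral>b. cnj (G b) *
        (complex_of_real c0 * (\<integral>a. F a * complex_of_real (gk \<sigma> (\<eta> + b - a)) \<partial>lborel)) \<partial>lborel)))
     \<le> ennreal c0 * (ennreal c0 * J2 F G \<sigma> \<eta>)" for \<eta>
  proof -
    have "ennreal (norm (complex_of_real c0 * (\<integral>b. cnj (G b) *
        (complex_of_real c0 * (\<integral>a. F a * complex_of_real (gk \<sigma> (\<eta> + b - a)) \<partial>lborel)) \<partial>lborel)))
      \<le> ennreal c0 * (\<integral>\<^sup>+b. ennreal (norm (cnj (G b))) * (ennreal c0 * J1 F \<sigma> (\<eta> + b)) \<partial>lborel)"
      by (rule bound_level) (rule l1)
    also have "\<dots> = ennreal c0 * (ennreal c0 * J2 F G \<sigma> \<eta>)"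
      unfolding J2_def by (subst nn_integral_cmult[symmetric]) (auto simp: mult_ac)
    finally show ?thesis .
  qed
  have "ennreal (norm (complex_of_real c0 * (\<integral>c. H c * (complex_of_real c0 * (\<integral>b. cnj (G b) *
        (complex_of_real c0 * (\<integral>a. F a * complex_of_real (gk \<sigma> (\<xi> - c + b - a)) \<partial>lborel)) \<partial>lborel)) \<partial>lborel)))
     \<le> ennreal c0 * (\<integral>\<^sup>+c. ennreal (norm (H c)) * (ennreal c0 * (ennreal c0 * J2 F G \<sigma> (\<xi> - c))) \<partial>lborel)"
    by (rule bound_level) (rule l2)
  also have "\<dots> = ennreal c0 * (ennreal c0 * (ennreal c0 * J3 F G H \<sigma> \<xi>))"
    unfolding J3_def by (subst nn_integral_cmult[symmetric], simp, subst nn_integral_cmult[symmetric]) (auto simp: mult_ac)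
  finally show ?thesis .
qed


lemma gk_even: "gk \<sigma> (- y) = gk \<sigma> y" unfolding gk_def by (simp add: power_mult_distrib)

lemma gk_total: "\<sigma> > 0 \<Longrightarrow> (\<integral>\<^sup>+y. ennreal (gk \<sigma> y) \<partial>lborel) = ennreal (2*pi)"
  using gk_nn_integral[of \<sigma> 0] by (simp add: gk_even)

lemma J1_Linf:
  assumes s: "\<sigma> > 0" and F: "\<And>a. norm (F a) \<le> \<alpha>"
  shows "J1 F \<sigma> \<zeta> \<le> ennreal \<alpha> * ennreal (2*pi)"
proof -
  have "J1 F \<sigma> \<zeta> \<le> (\<integral>\<^sup>+a. ennreal \<alpha> * ennreal (gk \<sigma> (\<zeta> - a)) \<partial>lborel)"
    unfolding J1_def by (intro nn_integral_mono mult_right_mono ennreal_leI F) auto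
  also have "\<dots> = ennreal \<alpha> * ennreal (2*pi)"
    by (subst nn_integral_cmult) (auto simp: gk_nn_integral[OF s])
  finally show ?thesis .
qed

lemma J2_Linf:
  assumes s: "\<sigma> > 0" and F: "\<And>a. norm (F a) \<le> \<alpha>" and [measurable]: "G \<in> borel_measurable borel"
  shows "J2 F G \<sigma> \<eta> \<le> (\<integral>\<^sup>+b. ennreal (norm (G b)) \<partial>lborel) * (ennreal \<alpha> * ennreal (2*pi))"
proof -
  have "J2 F G \<sigma> \<eta> \<le> (\<integral>\<^sup>+b. ennreal (norm (G b)) * (ennreal \<alpha> * ennreal (2*pi)) \<partial>lborel)"
    unfolding J2_def by (intro nn_integral_mono mult_left_mono J1_Linf[OF s F]) auto
  also have "\<dots> = (\<integral>\<^sup>+b. ennreal (norm (G b)) \<partial>lborel) * (ennreal \<alpha> * ennreal (2*pi))"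
    by (rule nn_integral_multc) auto
  finally show ?thesis .
qed

lemma J3_Linf:
  assumes s: "\<sigma> > 0" and F: "\<And>a. norm (F a) \<le> \<alpha>" and [measurable]: "G \<in> borel_measurable borel"
    "H \<in> borel_measurable borel"
  shows "J3 F G H \<sigma> \<xi> \<le> (\<integral>\<^sup>+c. ennreal (norm (H c)) \<partial>lborel) * ((\<integral>\<^sup>+b. ennreal (norm (G b)) \<partial>lborel) * (ennreal \<alpha> * ennreal (2*pi)))"
proof -
  have "J3 F G H \<sigma> \<xi> \<le> (\<integral>\<^sup>+c. ennreal (norm (H c)) * ((\<integral>\<^sup>+b. ennreal (norm (G b)) \<partial>lborel) * (ennreal \<alpha> * ennreal (2*pi))) \<partial>lborel)"
    unfolding J3_def by (intro nn_integral_mono mult_left_mono J2_Linf[OF s F]) auto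
  also have "\<dots> = (\<integral>\<^sup>+c. ennreal (norm (H c)) \<partial>lborel) * ((\<integral>\<^sup>+b. ennreal (norm (G b)) \<partial>lborel) * (ennreal \<alpha> * ennreal (2*pi)))"
    by (rule nn_integral_multc) auto
  finally show ?thesis .
qed

lemma J3_L1:
  assumes s: "\<sigma> > 0" and [measurable]: "F \<in> borel_measurable borel" "G \<in> borel_measurable borel"
    "H \<in> borel_measurable borel"
  shows "(\<integral>\<^sup>+\<xi>. J3 F G H \<sigma> \<xi> \<partial>lborel) = (\<integral>\<^sup>+c. ennreal (norm (H c)) \<partial>lborel) *
     ((\<integral>\<^sup>+b. ennreal (norm (G b)) \<partial>lborel) * ((\<integral>\<^sup>+a. ennreal (norm (F a)) \<partial>lborel) * ennreal (2*pi)))"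
proof -
  have 1: "(\<integral>\<^sup>+\<zeta>. J1 F \<sigma> \<zeta> \<partial>lborel) = (\<integral>\<^sup>+a. ennreal (norm (F a)) \<partial>lborel) * ennreal (2*pi)"
  proof -
    have "(\<integral>\<^sup>+\<zeta>. J1 F \<sigma> \<zeta> \<partial>lborel) = (\<integral>\<^sup>+\<zeta>. (\<integral>\<^sup>+a. ennreal (norm (F a)) * (\<lambda>y. ennreal (gk \<sigma> y)) (\<zeta> + (-1) * a) \<partial>lborel) \<partial>lborel)"
      unfolding J1_def by simp
    also have "\<dots> = (\<integral>\<^sup>+a. ennreal (norm (F a)) \<partial>lborel) * (\<integral>\<^sup>+y. ennreal (gk \<sigma> y) \<partial>lborel)"
      by (rule conv_nn) auto
    finally show ?thesis by (simp add: gk_total[OF s])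
  qed
  have 2: "(\<integral>\<^sup>+\<eta>. J2 F G \<sigma> \<eta> \<partial>lborel) = (\<integral>\<^sup>+b. ennreal (norm (G b)) \<partial>lborel) * (\<integral>\<^sup>+\<zeta>. J1 F \<sigma> \<zeta> \<partial>lborel)"
    unfolding J2_def using conv_nn[of "\<lambda>b. ennreal (norm (G b))" "J1 F \<sigma>" 1] by simp
  have 3: "(\<integral>\<^sup>+\<xi>. J3 F G H \<sigma> \<xi> \<partial>lborel) = (\<integral>\<^sup>+c. ennreal (norm (H c)) \<partial>lborel) * (\<integral>\<^sup>+\<eta>. J2 F G \<sigma> \<eta> \<partial>lborel)"
    unfolding J3_def using conv_nn[of "\<lambda>c. ennreal (norm (H c))" "J2 F G \<sigma>" "-1"] by simp
  show ?thesis using 1 2 3 by simp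
qed

lemma J3_supp:
  assumes s: "\<sigma> > 0" and d: "0 \<le> \<delta>"
    and F0: "\<And>a. a \<notin> S1 \<Longrightarrow> F a = 0" and G0: "\<And>b. b \<notin> S2 \<Longrightarrow> G b = 0" and H0: "\<And>c. c \<notin> S3 \<Longrightarrow> H c = 0"
    and far: "\<And>a b c. a \<in> S1 \<Longrightarrow> b \<in> S2 \<Longrightarrow> c \<in> S3 \<Longrightarrow> \<delta> \<le> \<bar>\<xi> - c + b - a\<bar>"
    and [measurable]: "F \<in> borel_measurable borel" "G \<in> borel_measurable borel" "H \<in> borel_measurable borel"
  shows "J3 F G H \<sigma> \<xi> \<le> (\<integral>\<^sup>+c. ennreal (norm (H c)) \<partial>lborel) * ((\<integral>\<^sup>+b. ennreal (norm (G b)) \<partial>lborel) *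
     ((\<integral>\<^sup>+a. ennreal (norm (F a)) \<partial>lborel) * ennreal (\<sigma> * sqrt (2*pi) * exp (- ((\<sigma> * \<delta>)\<^sup>2) / 2))))"
proof -
  define m where "m = \<sigma> * sqrt (2*pi) * exp (- ((\<sigma> * \<delta>)\<^sup>2) / 2)"
  define nF where "nF = (\<integral>\<^sup>+a. ennreal (norm (F a)) \<partial>lborel)"
  define nG where "nG = (\<integral>\<^sup>+b. ennreal (norm (G b)) \<partial>lborel)"
  define nH where "nH = (\<integral>\<^sup>+c. ennreal (norm (H c)) \<partial>lborel)"
  have l1: "J1 F \<sigma> (\<xi> - c + b) \<le> nF * ennreal m" if "b \<in> S2" "c \<in> S3" for b c
  proof -
    have "J1 F \<sigma> (\<xi> - c + b) \<le> (\<integral>\<^sup>+a. ennreal (norm (F a)) * ennreal m \<partial>lborel)"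
      unfolding J1_def
    proof (intro nn_integral_mono)
      fix a
      show "ennreal (norm (F a)) * ennreal (gk \<sigma> (\<xi> - c + b - a)) \<le> ennreal (norm (F a)) * ennreal m"
      proof (cases "a \<in> S1")
        case True
        have "gk \<sigma> (\<xi> - c + b - a) \<le> m"
          using gk_decay[OF s far[OF True that] d] unfolding m_def by simp
        then show ?thesis by (intro mult_left_mono ennreal_leI) auto
      qed (simp add: F0)
    qed
    also have "\<dots> = nF * ennreal m" unfolding nF_def by (rule nn_integral_multc) auto
    finally show ?thesis .
  qed
  have l2: "J2 F G \<sigma> (\<xi> - c) \<le> nG * (nF * ennreal m)" if "c \<in> S3" for c
  proof -
    have "J2 F G \<sigma> (\<xi> - c) \<le> (\<integral>\<^sup>+b. ennreal (norm (G b)) * (nF * ennreal m) \<partial>lborel)"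
      unfolding J2_def
    proof (intro nn_integral_mono)
      fix b
      show "ennreal (norm (G b)) * J1 F \<sigma> (\<xi> - c + b) \<le> ennreal (norm (G b)) * (nF * ennreal m)"
        by (cases "b \<in> S2") (auto simp: G0 intro!: mult_left_mono l1 that)
    qed
    also have "\<dots> = nG * (nF * ennreal m)" unfolding nG_def by (rule nn_integral_multc) auto
    finally show ?thesis .
  qed
  have "J3 F G H \<sigma> \<xi> \<le> (\<integral>\<^sup>+c. ennreal (norm (H c)) * (nG * (nF * ennreal m)) \<partial>lborel)"
    unfolding J3_def
  proof (intro nn_integral_mono)
    fix c
    show "ennreal (norm (H c)) * J2 F G \<sigma> (\<xi> - c) \<le> ennreal (norm (H c)) * (nG * (nF * ennreal m))"
      by (cases "c \<in> S3") (auto simp: H0 intro!: mult_left_mono l2)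
  qed
  also have "\<dots> = nH * (nG * (nF * ennreal m))" unfolding nH_def by (rule nn_integral_multc) auto
  finally show ?thesis unfolding nH_def nG_def nF_def m_def .
qed


lemma ft_meas[measurable]:
  assumes [measurable]: "f \<in> borel_measurable borel" shows "ft f \<in> borel_measurable borel"
  unfolding ft_def by measurable

lemma ft_nonint:
  assumes [measurable]: "f \<in> borel_measurable borel" and ni: "\<not> integrable lborel f"
  shows "ft f \<xi> = 0"
proof -
  have "\<not> integrable lborel (\<lambda>x. cis (- (x * \<xi>)) * f x)"
  proof
    assume i: "integrable lborel (\<lambda>x. cis (- (x * \<xi>)) * f x)"
    have "integrable lborel (\<lambda>x. cis (x * \<xi>) * (cis (- (x * \<xi>)) * f x))"
      by (rule integrable_bounded_mult[OF i]) auto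
    moreover have "(\<lambda>x. cis (x * \<xi>) * (cis (- (x * \<xi>)) * f x)) = f"
      by (simp add: fun_eq_iff cis_mult mult.assoc[symmetric])
    ultimately have "integrable lborel f" by simp
    then show False using ni by simp
  qed
  then show ?thesis unfolding ft_def by (rule not_integrable_integral_eq)
qed

lemma nn_norm_eq:
  fixes F :: "real \<Rightarrow> 'b::{banach, second_countable_topology}"
  assumes i: "integrable lborel F"
  shows "(\<integral>\<^sup>+a. ennreal (norm (F a)) \<partial>lborel) = ennreal (\<integral>a. norm (F a) \<partial>lborel)"
  by (rule nn_integral_eq_integral[OF integrable_norm[OF i]]) auto

lemma reg_lim:
  fixes f :: "real \<Rightarrow> complex"
  assumes f: "integrable lborel f"
  shows "(\<lambda>n. ft (\<lambda>x. complex_of_real (gw (real n + 1) x) * f x) \<xi>) \<longlonglongrightarrow> ft f \<xi>"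
  unfolding ft_def
proof (rule integral_dominated_convergence[where w="\<lambda>x. norm (f x)"])
  have [measurable]: "f \<in> borel_measurable borel" using f by auto
  show "(\<lambda>x. cis (- (x * \<xi>)) * f x) \<in> borel_measurable lborel" by measurable
  show "(\<lambda>x. cis (- (x * \<xi>)) * (complex_of_real (gw (real i + 1) x) * f x)) \<in> borel_measurable lborel" for i
    by measurable
  show "integrable lborel (\<lambda>x. norm (f x))" using f by auto
  show "AE x in lborel. (\<lambda>i. cis (- (x * \<xi>)) * (complex_of_real (gw (real i + 1) x) * f x)) \<longlonglongrightarrow> cis (- (x * \<xi>)) * f x"
  proof (intro AE_I2)
    fix x
    have "(\<lambda>i. complex_of_real (gw (real i + 1) x)) \<longlonglongrightarrow> complex_of_real 1"
      by (intro tendsto_of_real gw_lim)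
    then have "(\<lambda>i. cis (- (x * \<xi>)) * (complex_of_real (gw (real i + 1) x) * f x)) \<longlonglongrightarrow> cis (- (x * \<xi>)) * (complex_of_real 1 * f x)"
      by (intro tendsto_mult[OF tendsto_const tendsto_mult[OF _ tendsto_const]])
    then show "(\<lambda>i. cis (- (x * \<xi>)) * (complex_of_real (gw (real i + 1) x) * f x)) \<longlonglongrightarrow> cis (- (x * \<xi>)) * f x"
      by simp
  qed
  show "AE x in lborel. norm (cis (- (x * \<xi>)) * (complex_of_real (gw (real i + 1) x) * f x)) \<le> norm (f x)" for i
    by (intro AE_I2) (auto simp: norm_mult gw_nonneg gw_le1 intro!: mult_left_le_one_le)
qed


lemma c0_cancel: "c0 * (c0 * (c0 * (x * (2 * pi)))) = c0^2 * x"
  by (simp add: field_simps power2_eq_square)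

lemma ennreal_prod3': "0 \<le> k \<Longrightarrow> 0 \<le> a \<Longrightarrow> 0 \<le> b \<Longrightarrow> 0 \<le> c \<Longrightarrow> 0 \<le> d \<Longrightarrow>
   ennreal k * (ennreal k * (ennreal k * (ennreal a * (ennreal b * (ennreal c * ennreal d)))))
   = ennreal (k * (k * (k * (a * (b * (c * d))))))"
  by (simp add: ennreal_mult)

lemma ennreal_prod3: "0 \<le> a \<Longrightarrow> 0 \<le> b \<Longrightarrow> 0 \<le> c \<Longrightarrow> 0 \<le> d \<Longrightarrow>
   ennreal c0 * (ennreal c0 * (ennreal c0 * (ennreal a * (ennreal b * (ennreal c * ennreal d)))))
   = ennreal (c0 * (c0 * (c0 * (a * (b * (c * d))))))"
  by (rule ennreal_prod3') auto

context
  fixes F G H :: "real \<Rightarrow> complex"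
  assumes F: "integrable lborel F" and G: "integrable lborel G" and H: "integrable lborel H"
begin

lemma Fm[measurable]: "F \<in> borel_measurable borel" using F by auto
lemma Gm[measurable]: "G \<in> borel_measurable borel" using G by auto
lemma Hm[measurable]: "H \<in> borel_measurable borel" using H by auto

lemma I_bound: "ennreal (norm (ft (\<lambda>x. complex_of_real (gw (real n + 1) x) * (ift F x * cnj (ift G x) * ift H x)) \<xi>))
   \<le> ennreal c0 * (ennreal c0 * (ennreal c0 * J3 F G H (real n + 1) \<xi>))"
proof -
  have p: "0 < real n + 1" by simp
  show ?thesis unfolding reg_identity[OF F G H p] by (rule reg_bound[OF p]) auto
qed

lemma kernel_Linf:
  assumes Fb: "\<And>a. norm (F a) \<le> \<alpha>"
  shows "norm (ft (\<lambda>x. ift F x * cnj (ift G x) * ift H x) \<xi>) \<le> c0^2 * (\<alpha> * ((\<integral>b. norm (G b) \<partial>lborel) * (\<integral>c. norm (H c) \<partial>lborel)))"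
proof -
  define f where "f x = ift F x * cnj (ift G x) * ift H x" for x
  have [measurable]: "f \<in> borel_measurable borel" unfolding f_def by measurable
  define NG where "NG = (\<integral>b. norm (G b) \<partial>lborel)"
  define NH where "NH = (\<integral>c. norm (H c) \<partial>lborel)"
  have a0: "0 \<le> \<alpha>" using Fb[of 0] norm_ge_zero order.trans by blast
  have g0: "0 \<le> NG" "0 \<le> NH" unfolding NG_def NH_def by auto
  have bd0: "0 \<le> c0^2 * (\<alpha> * (NG * NH))" using a0 g0 by simp
  show ?thesis
  proof (cases "integrable lborel f")
    case False
    then show ?thesis using ft_nonint[of f \<xi>] bd0 unfolding f_def[abs_def] NG_def NH_def by simp
  next
    case True
    have "norm (ft (\<lambda>x. complex_of_real (gw (real n + 1) x) * f x) \<xi>) \<le> c0^2 * (\<alpha> * (NG * NH))" for n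
    proof -
      have "ennreal (norm (ft (\<lambda>x. complex_of_real (gw (real n + 1) x) * f x) \<xi>))
          \<le> ennreal c0 * (ennreal c0 * (ennreal c0 * J3 F G H (real n + 1) \<xi>))"
        unfolding f_def by (rule I_bound)
      also have "\<dots> \<le> ennreal c0 * (ennreal c0 * (ennreal c0 * (ennreal NH * (ennreal NG * (ennreal \<alpha> * ennreal (2*pi))))))"
        using J3_Linf[where \<sigma>="real n + 1" and \<xi>=\<xi>, OF _ Fb Gm Hm] unfolding nn_norm_eq[OF G] nn_norm_eq[OF H] NG_def NH_def
        by (intro mult_left_mono) auto
      also have "\<dots> = ennreal (c0^2 * (\<alpha> * (NG * NH)))"
        using a0 g0 by (subst ennreal_prod3) (auto simp: field_simps power2_eq_square)
      finally show ?thesis using bd0 by (simp add: ennreal_le_iff)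
    qed
    moreover have "(\<lambda>n. norm (ft (\<lambda>x. complex_of_real (gw (real n + 1) x) * f x) \<xi>)) \<longlonglongrightarrow> norm (ft f \<xi>)"
      by (intro tendsto_norm reg_lim True)
    ultimately have "norm (ft f \<xi>) \<le> c0^2 * (\<alpha> * (NG * NH))"
      by (intro LIMSEQ_le_const2) auto
    then show ?thesis unfolding f_def[abs_def] NG_def NH_def .
  qed
qed


lemma kernel_L1:
  "(\<integral>\<^sup>+\<xi>. ennreal (norm (ft (\<lambda>x. ift F x * cnj (ift G x) * ift H x) \<xi>)) \<partial>lborel)
    \<le> ennreal (c0^2 * ((\<integral>a. norm (F a) \<partial>lborel) * ((\<integral>b. norm (G b) \<partial>lborel) * (\<integral>c. norm (H c) \<partial>lborel))))"
proof -
  define f where "f x = ift F x * cnj (ift G x) * ift H x" for x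
  have [measurable]: "f \<in> borel_measurable borel" unfolding f_def by measurable
  define NF where "NF = (\<integral>a. norm (F a) \<partial>lborel)"
  define NG where "NG = (\<integral>b. norm (G b) \<partial>lborel)"
  define NH where "NH = (\<integral>c. norm (H c) \<partial>lborel)"
  have g0: "0 \<le> NF" "0 \<le> NG" "0 \<le> NH" unfolding NF_def NG_def NH_def by auto
  define Bd where "Bd = c0^2 * (NF * (NG * NH))"
  have bd0: "0 \<le> Bd" using g0 unfolding Bd_def by simp
  show ?thesis
  proof (cases "integrable lborel f")
    case False
    then show ?thesis using ft_nonint[of f] unfolding f_def[abs_def] by simp
  next
    case True
    define I where "I n \<xi> = ennreal (norm (ft (\<lambda>x. complex_of_real (gw (real n + 1) x) * f x) \<xi>))" for n \<xi>
    have Im[measurable]: "I n \<in> borel_measurable borel" for n unfolding I_def by measurable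
    have lim: "liminf (\<lambda>n. I n \<xi>) = ennreal (norm (ft f \<xi>))" for \<xi>
      unfolding I_def
      by (intro lim_imp_Liminf tendsto_ennrealI tendsto_norm reg_lim True) simp
    have bn: "(\<integral>\<^sup>+\<xi>. I n \<xi> \<partial>lborel) \<le> ennreal Bd" for n
    proof -
      have "(\<integral>\<^sup>+\<xi>. I n \<xi> \<partial>lborel) \<le> (\<integral>\<^sup>+\<xi>. ennreal c0 * (ennreal c0 * (ennreal c0 * J3 F G H (real n + 1) \<xi>)) \<partial>lborel)"
        unfolding I_def f_def by (intro nn_integral_mono I_bound)
      also have "\<dots> = ennreal c0 * (ennreal c0 * (ennreal c0 * (\<integral>\<^sup>+\<xi>. J3 F G H (real n + 1) \<xi> \<partial>lborel)))"
        by (simp add: nn_integral_cmult)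
      also have "\<dots> = ennreal c0 * (ennreal c0 * (ennreal c0 * (ennreal NH * (ennreal NG * (ennreal NF * ennreal (2*pi))))))"
        by (subst J3_L1) (auto simp: nn_norm_eq[OF F] nn_norm_eq[OF G] nn_norm_eq[OF H] NF_def NG_def NH_def)
      also have "\<dots> = ennreal Bd"
        using g0 unfolding Bd_def by (subst ennreal_prod3) (auto simp: field_simps power2_eq_square)
      finally show ?thesis .
    qed
    have "(\<integral>\<^sup>+\<xi>. ennreal (norm (ft f \<xi>)) \<partial>lborel) = (\<integral>\<^sup>+\<xi>. liminf (\<lambda>n. I n \<xi>) \<partial>lborel)"
      by (simp add: lim)
    also have "\<dots> \<le> liminf (\<lambda>n. \<integral>\<^sup>+\<xi>. I n \<xi> \<partial>lborel)"
      by (rule nn_integral_liminf) simp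
    also have "\<dots> \<le> liminf (\<lambda>n. ennreal Bd)"
      by (intro Liminf_mono) (simp add: bn)
    also have "\<dots> = ennreal Bd" by (rule Liminf_const) simp
    finally show ?thesis unfolding f_def[abs_def] Bd_def NF_def NG_def NH_def .
  qed
qed

lemma kernel_supp:
  assumes d: "0 < \<delta>"
    and F0: "\<And>a. a \<notin> S1 \<Longrightarrow> F a = 0" and G0: "\<And>b. b \<notin> S2 \<Longrightarrow> G b = 0" and H0: "\<And>c. c \<notin> S3 \<Longrightarrow> H c = 0"
    and far: "\<And>a b c. a \<in> S1 \<Longrightarrow> b \<in> S2 \<Longrightarrow> c \<in> S3 \<Longrightarrow> \<delta> \<le> \<bar>\<xi> - c + b - a\<bar>"
  shows "ft (\<lambda>x. ift F x * cnj (ift G x) * ift H x) \<xi> = 0"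
proof -
  define f where "f x = ift F x * cnj (ift G x) * ift H x" for x
  have [measurable]: "f \<in> borel_measurable borel" unfolding f_def by measurable
  define NF where "NF = (\<integral>a. norm (F a) \<partial>lborel)"
  define NG where "NG = (\<integral>b. norm (G b) \<partial>lborel)"
  define NH where "NH = (\<integral>c. norm (H c) \<partial>lborel)"
  have g0: "0 \<le> NF" "0 \<le> NG" "0 \<le> NH" unfolding NF_def NG_def NH_def by auto
  define m where "m n = (real n + 1) * sqrt (2*pi) * exp (- (((real n + 1) * \<delta>)\<^sup>2) / 2)" for n
  have m0: "0 \<le> m n" for n unfolding m_def by simp
  show ?thesis
  proof (cases "integrable lborel f")
    case False
    then show ?thesis using ft_nonint[of f] unfolding f_def[abs_def] by simp
  next
    case True
    have b: "norm (ft (\<lambda>x. complex_of_real (gw (real n + 1) x) * f x) \<xi>) \<le> c0 * (c0 * (c0 * (NH * (NG * (NF * m n)))))" for n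
    proof -
      have "ennreal (norm (ft (\<lambda>x. complex_of_real (gw (real n + 1) x) * f x) \<xi>))
          \<le> ennreal c0 * (ennreal c0 * (ennreal c0 * J3 F G H (real n + 1) \<xi>))"
        unfolding f_def by (rule I_bound)
      also have "\<dots> \<le> ennreal c0 * (ennreal c0 * (ennreal c0 * (ennreal NH * (ennreal NG * (ennreal NF * ennreal (m n))))))"
        using J3_supp[where \<sigma>="real n + 1" and \<xi>=\<xi>, OF _ _ F0 G0 H0 far Fm Gm Hm] d
        unfolding nn_norm_eq[OF F] nn_norm_eq[OF G] nn_norm_eq[OF H] NF_def NG_def NH_def m_def
        by (intro mult_left_mono) auto
      also have "\<dots> = ennreal (c0 * (c0 * (c0 * (NH * (NG * (NF * m n))))))"
        using g0 m0 by (subst ennreal_prod3) auto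
      finally show ?thesis using g0 m0 by (simp add: ennreal_le_iff)
    qed
    have l1: "(\<lambda>n. norm (ft (\<lambda>x. complex_of_real (gw (real n + 1) x) * f x) \<xi>)) \<longlonglongrightarrow> norm (ft f \<xi>)"
      by (intro tendsto_norm reg_lim True)
    have l2: "(\<lambda>n. c0 * (c0 * (c0 * (NH * (NG * (NF * m n)))))) \<longlonglongrightarrow> c0 * (c0 * (c0 * (NH * (NG * (NF * 0)))))"
      unfolding m_def by (intro tendsto_intros gk_decay_lim d)
    have "norm (ft f \<xi>) \<le> c0 * (c0 * (c0 * (NH * (NG * (NF * 0)))))"
      by (rule tendsto_le[OF trivial_limit_sequentially l2 l1]) (rule always_eventually, rule allI, rule b)
    then have "norm (ft f \<xi>) \<le> 0" by simp
    then show ?thesis unfolding f_def[abs_def] by simp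
  qed
qed

end


definition Tr :: "nat \<Rightarrow> (nat \<times> nat \<times> nat) set" where
  "Tr k = {(a, b, c). a + b + c = k \<and> 1 \<le> a \<and> 1 \<le> b \<and> 1 \<le> c}"

lemma Tr_sub: "Tr k \<subseteq> {1..k} \<times> {1..k} \<times> {1..k}"
  unfolding Tr_def by auto

lemma finite_Tr[simp]: "finite (Tr k)"
  by (rule finite_subset[OF Tr_sub]) auto

lemma inv_sq_sum: "m \<ge> 1 \<Longrightarrow> (\<Sum>i\<in>{1..m}. 1 / (real i)\<^sup>2) \<le> 2 - 1 / real m"
proof (induction m rule: dec_induct)
  case base then show ?case by simp
next
  case (step m)
  have "(\<Sum>i\<in>{1..Suc m}. 1 / (real i)\<^sup>2) = (\<Sum>i\<in>{1..m}. 1 / (real i)\<^sup>2) + 1 / (real (Suc m))\<^sup>2"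
    by simp
  also have "\<dots> \<le> 2 - 1 / real m + 1 / (real (Suc m))\<^sup>2" using step by simp
  also have "\<dots> \<le> 2 - 1 / real (Suc m)"
  proof -
    have m: "real m \<ge> 1" using step by simp
    have "real m * (real m + 1) \<le> (real m + 1)\<^sup>2" by (simp add: power2_eq_square)
    then have "1 / (real m + 1)\<^sup>2 \<le> 1 / (real m * (real m + 1))"
      using m by (intro frac_le) auto
    also have "\<dots> = 1 / real m - 1 / (real m + 1)" using m by (simp add: field_simps)
    finally have "1 / (real (Suc m))\<^sup>2 \<le> 1 / real m - 1 / real (Suc m)" by (simp add: add.commute)
    then show ?thesis by simp
  qed
  finally show ?case .
qed

lemma inv_sq_sum2: "(\<Sum>i\<in>{1..m}. 1 / (real i)\<^sup>2) \<le> 2"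
proof (cases "m \<ge> 1")
  case True
  have "0 \<le> 1 / real m" by simp
  then show ?thesis using inv_sq_sum[OF True] by linarith
qed simp

lemma pair_sum_bound:
  assumes inj: "inj_on p (Tr k)" and sub: "p ` Tr k \<subseteq> {1..k} \<times> {1..k}"
  shows "(\<Sum>x\<in>Tr k. 1 / (real (fst (p x)) * real (snd (p x)))\<^sup>2) \<le> 4"
proof -
  have "(\<Sum>x\<in>Tr k. 1 / (real (fst (p x)) * real (snd (p x)))\<^sup>2) = (\<Sum>y\<in>p ` Tr k. 1 / (real (fst y) * real (snd y))\<^sup>2)"
    using sum.reindex[OF inj, of "\<lambda>y. 1 / (real (fst y) * real (snd y))\<^sup>2"] by simp
  also have "\<dots> \<le> (\<Sum>y\<in>{1..k} \<times> {1..k}. 1 / (real (fst y) * real (snd y))\<^sup>2)"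
    by (rule sum_mono2[OF _ sub]) auto
  also have "\<dots> = (\<Sum>i\<in>{1..k}. 1 / (real i)\<^sup>2) * (\<Sum>j\<in>{1..k}. 1 / (real j)\<^sup>2)"
    by (simp add: sum_product sum.cartesian_product power_mult_distrib split_def)
  also have "\<dots> \<le> 2 * 2"
    by (intro mult_mono inv_sq_sum2) (auto intro: sum_nonneg)
  finally show ?thesis by simp
qed

lemma tri_pt:
  assumes "(a, b, c) \<in> Tr k"
  shows "1 / (real a * real b * real c)\<^sup>2 \<le> 9 / (real k)\<^sup>2 *
     (1 / (real b * real c)\<^sup>2 + 1 / (real a * real c)\<^sup>2 + 1 / (real a * real b)\<^sup>2)"
proof -
  from assms have s: "a + b + c = k" "1 \<le> a" "1 \<le> b" "1 \<le> c" unfolding Tr_def by auto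
  have kpos: "real k > 0" using s by simp
  have gen: "1 / (x * y * z)\<^sup>2 \<le> 9 / (real k)\<^sup>2 * (1 / (y * z)\<^sup>2)" if "real k \<le> 3 * x" "x \<ge> 1" "y \<ge> 1" "z \<ge> 1" for x y z :: real
  proof -
    have "(real k)\<^sup>2 \<le> (3 * x)\<^sup>2" using that kpos by (intro power_mono) auto
    then have "(real k)\<^sup>2 * (y * z)\<^sup>2 \<le> (3 * x)\<^sup>2 * (y * z)\<^sup>2"
      by (rule mult_right_mono) auto
    then have "(real k)\<^sup>2 * (y * z)\<^sup>2 \<le> 9 * (x * y * z)\<^sup>2"
      by (simp add: power_mult_distrib mult_ac)
    then show ?thesis using that kpos
      by (simp add: field_simps)
  qed
  define X where "X = 9 / (real k)\<^sup>2 * (1 / (real b * real c)\<^sup>2)"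
  define Y where "Y = 9 / (real k)\<^sup>2 * (1 / (real a * real c)\<^sup>2)"
  define Z where "Z = 9 / (real k)\<^sup>2 * (1 / (real a * real b)\<^sup>2)"
  have nn: "0 \<le> X" "0 \<le> Y" "0 \<le> Z" unfolding X_def Y_def Z_def by auto
  have e: "9 / (real k)\<^sup>2 * (1 / (real b * real c)\<^sup>2 + 1 / (real a * real c)\<^sup>2 + 1 / (real a * real b)\<^sup>2) = X + Y + Z"
    unfolding X_def Y_def Z_def by (simp only: distrib_left)
  consider "real k \<le> 3 * real a" | "real k \<le> 3 * real b" | "real k \<le> 3 * real c" using s by linarith
  then have "1 / (real a * real b * real c)\<^sup>2 \<le> X \<or> 1 / (real a * real b * real c)\<^sup>2 \<le> Y \<or> 1 / (real a * real b * real c)\<^sup>2 \<le> Z"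
  proof cases
    case 1
    then show ?thesis using gen[of a b c] s unfolding X_def by simp
  next
    case 2
    have h: "1 / (real b * real a * real c)\<^sup>2 \<le> Y" using gen[of b a c] 2 s unfolding Y_def by simp
    have "real a * real b * real c = real b * real a * real c" by (simp only: mult.commute[of "real a" "real b"])
    then show ?thesis using h by (simp only:) simp
  next
    case 3
    have h: "1 / (real c * real a * real b)\<^sup>2 \<le> Z" using gen[of c a b] 3 s unfolding Z_def by simp
    have "real a * real b * real c = real c * real a * real b" by (simp only: mult.commute mult.left_commute)
    then show ?thesis using h by (simp only:) simp
  qed
  then show ?thesis unfolding e using nn by linarith
qed

lemma tri_sum: "(\<Sum>(a,b,c)\<in>Tr k. 1 / (real a * real b * real c)\<^sup>2) \<le> 108 / (real k)\<^sup>2"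
proof -
  have "(\<Sum>(a,b,c)\<in>Tr k. 1 / (real a * real b * real c)\<^sup>2) \<le>
        (\<Sum>(a,b,c)\<in>Tr k. 9 / (real k)\<^sup>2 * (1 / (real b * real c)\<^sup>2 + 1 / (real a * real c)\<^sup>2 + 1 / (real a * real b)\<^sup>2))"
  proof (rule sum_mono)
    fix x assume x: "x \<in> Tr k"
    obtain a b c where xe: "x = (a, b, c)" by (cases x) auto
    show "(case x of (a, b, c) \<Rightarrow> 1 / (real a * real b * real c)\<^sup>2) \<le> (case x of (a, b, c) \<Rightarrow> 9 / (real k)\<^sup>2 *
      (1 / (real b * real c)\<^sup>2 + 1 / (real a * real c)\<^sup>2 + 1 / (real a * real b)\<^sup>2))"
      unfolding xe prod.case using x xe by (intro tri_pt) simp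
  qed
  also have "\<dots> = 9 / (real k)\<^sup>2 * ((\<Sum>x\<in>Tr k. 1 / (real (fst (snd x)) * real (snd (snd x)))\<^sup>2)
        + (\<Sum>x\<in>Tr k. 1 / (real (fst x) * real (snd (snd x)))\<^sup>2)
        + (\<Sum>x\<in>Tr k. 1 / (real (fst x) * real (fst (snd x)))\<^sup>2))"
    by (simp only: sum.distrib[symmetric] sum_distrib_left split_def)
  also have "\<dots> \<le> 9 / (real k)\<^sup>2 * (4 + 4 + 4)"
  proof -
    have i1: "inj_on (\<lambda>x. (fst (snd x), snd (snd x))) (Tr k)" by (auto simp: inj_on_def Tr_def)
    have i2: "inj_on (\<lambda>x. (fst x, snd (snd x))) (Tr k)" by (auto simp: inj_on_def Tr_def)
    have i3: "inj_on (\<lambda>x. (fst x, fst (snd x))) (Tr k)" by (auto simp: inj_on_def Tr_def)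
    have s1: "(\<lambda>x. (fst (snd x), snd (snd x))) ` Tr k \<subseteq> {1..k} \<times> {1..k}" by (auto simp: Tr_def)
    have s2: "(\<lambda>x. (fst x, snd (snd x))) ` Tr k \<subseteq> {1..k} \<times> {1..k}" by (auto simp: Tr_def)
    have s3: "(\<lambda>x. (fst x, fst (snd x))) ` Tr k \<subseteq> {1..k} \<times> {1..k}" by (auto simp: Tr_def)
    show ?thesis
      using pair_sum_bound[OF i1 s1] pair_sum_bound[OF i2 s2] pair_sum_bound[OF i3 s3]
      by (intro mult_left_mono add_mono) auto
  qed
  finally show ?thesis by simp
qed


lemma Uhat_0: "Uhat \<mu> ph 0 t \<xi> = 0"
  by (subst Uhat.simps) simp

lemma Uhat_1: "Uhat \<mu> ph (Suc 0) t \<xi> = cis (- (t * \<bar>\<xi>\<bar>)) * ph \<xi>"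
  by (subst Uhat.simps) simp

definition Phi :: "real \<Rightarrow> (real \<Rightarrow> complex) \<Rightarrow> nat \<Rightarrow> nat \<Rightarrow> nat \<Rightarrow> real \<Rightarrow> real \<Rightarrow> complex" where
  "Phi \<mu> ph k1 k2 k3 \<tau> \<xi> = ft (\<lambda>x. ift (Uhat \<mu> ph k1 \<tau>) x * cnj (ift (Uhat \<mu> ph k2 \<tau>) x)
                     * ift (Uhat \<mu> ph k3 \<tau>) x) \<xi>"

lemma Uhat_rec: "k \<ge> 2 \<Longrightarrow> Uhat \<mu> ph k t \<xi> = - \<i> * complex_of_real \<mu> *
   (\<Sum>(k1, k2, k3)\<in>Tr k. LINT \<tau>:{0..t}|lborel. cis (- ((t - \<tau>) * \<bar>\<xi>\<bar>)) * Phi \<mu> ph k1 k2 k3 \<tau> \<xi>)"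
  by (subst Uhat.simps) (simp add: Tr_def Phi_def del: Uhat.simps)

lemma ift2_meas[measurable]:
  assumes [measurable]: "case_prod P \<in> borel_measurable (borel \<Otimes>\<^sub>M borel)"
  shows "(\<lambda>(\<tau>, x). ift (P \<tau>) x) \<in> borel_measurable (borel \<Otimes>\<^sub>M borel)"
  unfolding ift_def by measurable

lemma Phi_meas:
  assumes [measurable]: "case_prod (Uhat \<mu> ph k1) \<in> borel_measurable (borel \<Otimes>\<^sub>M borel)"
    "case_prod (Uhat \<mu> ph k2) \<in> borel_measurable (borel \<Otimes>\<^sub>M borel)"
    "case_prod (Uhat \<mu> ph k3) \<in> borel_measurable (borel \<Otimes>\<^sub>M borel)"
  shows "case_prod (Phi \<mu> ph k1 k2 k3) \<in> borel_measurable (borel \<Otimes>\<^sub>M borel)"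
proof -
  have [measurable]: "(\<lambda>(\<tau>, x). ift (Uhat \<mu> ph k1 \<tau>) x) \<in> borel_measurable (borel \<Otimes>\<^sub>M borel)"
    "(\<lambda>(\<tau>, x). ift (Uhat \<mu> ph k2 \<tau>) x) \<in> borel_measurable (borel \<Otimes>\<^sub>M borel)"
    "(\<lambda>(\<tau>, x). ift (Uhat \<mu> ph k3 \<tau>) x) \<in> borel_measurable (borel \<Otimes>\<^sub>M borel)"
    by (rule ift2_meas; fact)+
  show ?thesis unfolding Phi_def[abs_def] ft_def by measurable
qed

lemma set_int_Icc: "(LINT \<tau>:{0..t}|lborel. g \<tau>) = (LINT \<tau>|lborel. (if 0 \<le> \<tau> \<and> \<tau> \<le> t then g \<tau> else 0))"
  unfolding set_lebesgue_integral_def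
  by (rule Bochner_Integration.integral_cong) (auto simp: indicator_def)

lemma Uhat_meas:
  assumes ph[measurable]: "ph \<in> borel_measurable borel"
  shows "case_prod (Uhat \<mu> ph k) \<in> borel_measurable (borel \<Otimes>\<^sub>M borel)"
proof (induction k rule: less_induct)
  case (less k)
  consider "k = 0" | "k = 1" | "k \<ge> 2" by linarith
  then show ?case
  proof cases
    case 1 then show ?thesis by (simp add: Uhat_0[abs_def])
  next
    case 2 then show ?thesis by (simp add: Uhat_1[abs_def] split_beta')
  next
    case 3
    have e: "case_prod (Uhat \<mu> ph k) = (\<lambda>p. - \<i> * complex_of_real \<mu> *
      (\<Sum>q\<in>Tr k. LINT \<tau>|lborel. (if 0 \<le> \<tau> \<and> \<tau> \<le> fst p then cis (- ((fst p - \<tau>) * \<bar>snd p\<bar>)) *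
         Phi \<mu> ph (fst q) (fst (snd q)) (snd (snd q)) \<tau> (snd p) else 0)))"
      using 3 by (auto simp: fun_eq_iff Uhat_rec set_int_Icc split_def simp del: Uhat.simps)
    show ?thesis unfolding e
    proof (intro borel_measurable_times borel_measurable_const borel_measurable_sum)
      fix q assume q: "q \<in> Tr k"
      then have lt: "fst q < k" "fst (snd q) < k" "snd (snd q) < k" by (auto simp: Tr_def)
      have [measurable]: "case_prod (Phi \<mu> ph (fst q) (fst (snd q)) (snd (snd q))) \<in> borel_measurable (borel \<Otimes>\<^sub>M borel)"
        using less[OF lt(1)] less[OF lt(2)] less[OF lt(3)] by (rule Phi_meas)
      show "(\<lambda>p. LINT \<tau>|lborel. (if 0 \<le> \<tau> \<and> \<tau> \<le> fst p then cis (- ((fst p - \<tau>) * \<bar>snd p\<bar>)) *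
         Phi \<mu> ph (fst q) (fst (snd q)) (snd (snd q)) \<tau> (snd p) else 0)) \<in> borel_measurable (borel \<Otimes>\<^sub>M borel)"
        by measurable
    qed
  qed
qed


lemma TI1:
  fixes g :: "real \<Rightarrow> complex"
  assumes t: "0 \<le> t" and b: "\<And>\<tau>. 0 \<le> \<tau> \<Longrightarrow> \<tau> \<le> t \<Longrightarrow> norm (g \<tau>) \<le> B"
  shows "norm (LINT \<tau>:{0..t}|lborel. g \<tau>) \<le> B * t"
proof -
  have B0: "0 \<le> B" using b[of 0] t norm_ge_zero order.trans by blast
  have "ennreal (norm (LINT \<tau>:{0..t}|lborel. g \<tau>)) \<le> (\<integral>\<^sup>+\<tau>. ennreal (norm (indicator {0..t} \<tau> *\<^sub>R g \<tau>)) \<partial>lborel)"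
    unfolding set_lebesgue_integral_def by (rule norm_integral_le_nn)
  also have "\<dots> \<le> (\<integral>\<^sup>+\<tau>. ennreal B * indicator {0..t} \<tau> \<partial>lborel)"
    by (intro nn_integral_mono) (auto simp: indicator_def b intro!: ennreal_leI)
  also have "\<dots> = ennreal (B * t)"
    using t B0 by (simp add: nn_integral_cmult_indicator ennreal_mult)
  finally show ?thesis using B0 t by (simp add: ennreal_le_iff)
qed

lemma TI2:
  fixes g :: "real \<Rightarrow> real \<Rightarrow> complex"
  assumes t: "0 \<le> t" and gm[measurable]: "case_prod g \<in> borel_measurable (borel \<Otimes>\<^sub>M borel)"
    and b: "\<And>\<tau>. 0 \<le> \<tau> \<Longrightarrow> \<tau> \<le> t \<Longrightarrow> (\<integral>\<^sup>+\<xi>. ennreal (norm (g \<tau> \<xi>)) \<partial>lborel) \<le> ennreal B"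
    and B0: "0 \<le> B"
  shows "(\<integral>\<^sup>+\<xi>. ennreal (norm (LINT \<tau>:{0..t}|lborel. g \<tau> \<xi>)) \<partial>lborel) \<le> ennreal (B * t)"
proof -
  have "(\<integral>\<^sup>+\<xi>. ennreal (norm (LINT \<tau>:{0..t}|lborel. g \<tau> \<xi>)) \<partial>lborel)
      \<le> (\<integral>\<^sup>+\<xi>. (\<integral>\<^sup>+\<tau>. indicator {0..t} \<tau> * ennreal (norm (g \<tau> \<xi>)) \<partial>lborel) \<partial>lborel)"
    unfolding set_lebesgue_integral_def
    by (intro nn_integral_mono order.trans[OF norm_integral_le_nn]) (auto simp: indicator_def)
  also have "\<dots> = (\<integral>\<^sup>+\<tau>. (\<integral>\<^sup>+\<xi>. indicator {0..t} \<tau> * ennreal (norm (g \<tau> \<xi>)) \<partial>lborel) \<partial>lborel)"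
    by (rule lborel_pair.Fubini') measurable
  also have "\<dots> = (\<integral>\<^sup>+\<tau>. indicator {0..t} \<tau> * (\<integral>\<^sup>+\<xi>. ennreal (norm (g \<tau> \<xi>)) \<partial>lborel) \<partial>lborel)"
    by (subst nn_integral_cmult) auto
  also have "\<dots> \<le> (\<integral>\<^sup>+\<tau>. ennreal B * indicator {0..t} \<tau> \<partial>lborel)"
    by (intro nn_integral_mono) (auto simp: indicator_def b mult.commute)
  also have "\<dots> = ennreal (B * t)"
    using t B0 by (simp add: nn_integral_cmult_indicator ennreal_mult)
  finally show ?thesis .
qed


definition wk :: "nat \<Rightarrow> real" where "wk k = 2 * 4 ^ (k - 1) / (real k)\<^sup>2"

lemma wk_nonneg: "0 \<le> wk k" unfolding wk_def by simp

lemma c0_sq_le: "c0^2 \<le> 1/36"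
proof -
  have p: "9 \<le> pi^2" using pi_gt3 power_mono[of 3 pi 2] by simp
  have "c0^2 = 1 / (4 * pi^2)" by (simp add: power_divide power_mult_distrib)
  also have "\<dots> \<le> 1 / (4 * 9)" using p by (intro divide_left_mono) auto
  finally show ?thesis by simp
qed

lemma wsum:
  assumes k: "k \<ge> 3"
  shows "(\<Sum>(a,b,c)\<in>Tr k. c0^2 * (wk a * (wk b * wk c))) \<le> wk k"
proof -
  have eq: "c0^2 * (wk a * (wk b * wk c)) = (c0^2 * 8 * 4^(k-3)) * (1 / (real a * real b * real c)\<^sup>2)"
    if "(a,b,c) \<in> Tr k" for a b c
  proof -
    from that have s: "a + b + c = k" "1 \<le> a" "1 \<le> b" "1 \<le> c" by (auto simp: Tr_def)
    then have e: "(a - 1) + ((b - 1) + (c - 1)) = k - 3" by linarith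
    have "(4::real)^(a-1) * (4^(b-1) * 4^(c-1)) = 4^(k-3)"
      unfolding e[symmetric] power_add by simp
    then show ?thesis unfolding wk_def by (simp add: field_simps power_mult_distrib)
  qed
  have "(\<Sum>(a,b,c)\<in>Tr k. c0^2 * (wk a * (wk b * wk c))) = (\<Sum>(a,b,c)\<in>Tr k. (c0^2 * 8 * 4^(k-3)) * (1 / (real a * real b * real c)\<^sup>2))"
    by (intro sum.cong refl) (auto simp: eq)
  also have "\<dots> = (c0^2 * 8 * 4^(k-3)) * (\<Sum>(a,b,c)\<in>Tr k. 1 / (real a * real b * real c)\<^sup>2)"
    by (simp add: sum_distrib_left split_def)
  also have "\<dots> \<le> (c0^2 * 8 * 4^(k-3)) * (108 / (real k)\<^sup>2)"
    by (intro mult_left_mono tri_sum) auto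
  also have "\<dots> \<le> ((1/36) * 8 * 4^(k-3)) * (108 / (real k)\<^sup>2)"
    by (intro mult_right_mono c0_sq_le) auto
  also have "\<dots> \<le> wk k"
  proof -
    have "(4::real)^(k-1) = 16 * 4^(k-3)"
    proof -
      have "k - 1 = 2 + (k - 3)" using k by simp
      then show ?thesis by (simp add: power_add)
    qed
    moreover have "(1/36) * 8 * 4^(k-3) * (108 / (real k)\<^sup>2) \<le> 2 * (16 * 4^(k-3)) / (real k)\<^sup>2"
      by (simp add: divide_right_mono)
    ultimately show ?thesis unfolding wk_def by simp
  qed
  finally show ?thesis .
qed

definition Tset :: "real \<Rightarrow> real \<Rightarrow> nat \<Rightarrow> real set" where
  "Tset N A k = {\<xi>. \<exists>j::int. \<bar>j\<bar> \<le> 2 * int k \<and> \<bar>\<xi> - of_int j * N\<bar> \<le> (real k - 1/2) * A}"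

lemma Tset_far:
  assumes A: "0 \<le> A" and q: "(k1, k2, k3) \<in> Tr k" and x: "\<xi> \<notin> Tset N A k"
    and a: "a \<in> Tset N A k1" and b: "b \<in> Tset N A k2" and c: "c \<in> Tset N A k3"
  shows "A \<le> \<bar>\<xi> - c + b - a\<bar>"
proof -
  from q have s: "k1 + k2 + k3 = k" by (auto simp: Tr_def)
  obtain j1 where j1: "\<bar>j1\<bar> \<le> 2 * int k1" "\<bar>a - of_int j1 * N\<bar> \<le> (real k1 - 1/2) * A"
    using a unfolding Tset_def by auto
  obtain j2 where j2: "\<bar>j2\<bar> \<le> 2 * int k2" "\<bar>b - of_int j2 * N\<bar> \<le> (real k2 - 1/2) * A"
    using b unfolding Tset_def by auto
  obtain j3 where j3: "\<bar>j3\<bar> \<le> 2 * int k3" "\<bar>c - of_int j3 * N\<bar> \<le> (real k3 - 1/2) * A"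
    using c unfolding Tset_def by auto
  define j where "j = j1 - j2 + j3"
  have "\<bar>j\<bar> \<le> 2 * int k" unfolding j_def using j1 j2 j3 s by linarith
  then have "\<not> \<bar>\<xi> - of_int j * N\<bar> \<le> (real k - 1/2) * A" using x unfolding Tset_def by auto
  then have fj: "\<bar>\<xi> - of_int j * N\<bar> > (real k - 1/2) * A" by simp
  have rk: "real k = real k1 + real k2 + real k3" using s by simp
  have "\<bar>(a - of_int j1 * N) - (b - of_int j2 * N) + (c - of_int j3 * N)\<bar> \<le> (real k1 - 1/2) * A + (real k2 - 1/2) * A + (real k3 - 1/2) * A"
    using j1 j2 j3 by (smt (verit))
  moreover have "(a - of_int j1 * N) - (b - of_int j2 * N) + (c - of_int j3 * N) = (a - b + c) - of_int j * N"
    unfolding j_def by (simp add: algebra_simps)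
  ultimately have "\<bar>(a - b + c) - of_int j * N\<bar> \<le> (real k - 3/2) * A"
    unfolding rk by (simp add: algebra_simps)
  moreover have "(real k - 3/2) * A = (real k - 1/2) * A - A" by (simp add: algebra_simps)
  moreover have "\<xi> - c + b - a = (\<xi> - of_int j * N) - ((a - b + c) - of_int j * N)" by simp
  moreover have "\<bar>\<xi> - of_int j * N\<bar> - \<bar>(a - b + c) - of_int j * N\<bar> \<le> \<bar>(\<xi> - of_int j * N) - ((a - b + c) - of_int j * N)\<bar>"
    by (rule abs_triangle_ineq2)
  ultimately show ?thesis using fj by linarith
qed


lemma ph_meas[measurable]: "phi_hat R N A \<in> borel_measurable borel"
  unfolding phi_hat_def by measurable

lemma ph_norm_eq: "R > 0 \<Longrightarrow> norm (phi_hat R N A \<xi>) = R * (indicator {N - A/2 ..< N + A/2} \<xi> + indicator {2*N - A/2 ..< 2*N + A/2} \<xi>)"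
  unfolding phi_hat_def by (simp add: indicator_def)

lemma ph_norm: "R > 0 \<Longrightarrow> norm (phi_hat R N A \<xi>) \<le> 2 * R"
  unfolding ph_norm_eq by (auto simp: indicator_def)

lemma ph_nn:
  assumes R: "R > 0" and A: "A > 0"
  shows "(\<integral>\<^sup>+\<xi>. ennreal (norm (phi_hat R N A \<xi>)) \<partial>lborel) = ennreal (2 * R * A)"
proof -
  have "(\<integral>\<^sup>+\<xi>. ennreal (norm (phi_hat R N A \<xi>)) \<partial>lborel)
     = (\<integral>\<^sup>+\<xi>. ennreal R * indicator {N - A/2 ..< N + A/2} \<xi> + ennreal R * indicator {2*N - A/2 ..< 2*N + A/2} \<xi> \<partial>lborel)"
    using R by (intro nn_integral_cong) (auto simp: ph_norm_eq indicator_def ennreal_plus[symmetric] simp del: ennreal_plus)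
  also have "\<dots> = ennreal R * emeasure lborel {N - A/2 ..< N + A/2} + ennreal R * emeasure lborel {2*N - A/2 ..< 2*N + A/2}"
    by (subst nn_integral_add) (auto simp: nn_integral_cmult_indicator)
  also have "\<dots> = ennreal (2 * R * A)"
    using R A by (simp add: ennreal_mult[symmetric] ennreal_plus[symmetric] del: ennreal_plus)
  finally show ?thesis .
qed

lemma ph_int:
  assumes R: "R > 0" and A: "A > 0"
  shows "integrable lborel (phi_hat R N A)" "(\<integral>\<xi>. norm (phi_hat R N A \<xi>) \<partial>lborel) = 2 * R * A"
proof -
  show i: "integrable lborel (phi_hat R N A)"
    by (rule integrableI_bounded) (auto simp: ph_nn[OF R A])
  have "ennreal (\<integral>\<xi>. norm (phi_hat R N A \<xi>) \<partial>lborel) = ennreal (2 * R * A)"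
    using nn_norm_eq[OF i] ph_nn[OF R A] by simp
  then show "(\<integral>\<xi>. norm (phi_hat R N A \<xi>) \<partial>lborel) = 2 * R * A"
    using R A by (subst (asm) ennreal_inj) auto
qed

lemma ph_supp:
  assumes "\<xi> \<notin> Tset N A 1"
  shows "phi_hat R N A \<xi> = 0"
proof -
  have "\<not> (N - A/2 \<le> \<xi> \<and> \<xi> < N + A/2)"
  proof
    assume h: "N - A/2 \<le> \<xi> \<and> \<xi> < N + A/2"
    have "\<bar>\<xi> - of_int 1 * N\<bar> \<le> (real 1 - 1/2) * A" using h by (auto simp: abs_if)
    then have "\<xi> \<in> Tset N A 1" unfolding Tset_def by (intro CollectI exI[of _ 1]) auto
    then show False using assms by simp
  qed
  moreover have "\<not> (2*N - A/2 \<le> \<xi> \<and> \<xi> < 2*N + A/2)"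
  proof
    assume h: "2*N - A/2 \<le> \<xi> \<and> \<xi> < 2*N + A/2"
    have "\<bar>\<xi> - of_int 2 * N\<bar> \<le> (real 1 - 1/2) * A" using h by (auto simp: abs_if)
    then have "\<xi> \<in> Tset N A 1" unfolding Tset_def by (intro CollectI exI[of _ 2]) auto
    then show False using assms by simp
  qed
  ultimately show ?thesis unfolding phi_hat_def by (auto simp: indicator_def)
qed


definition aB :: "real \<Rightarrow> real \<Rightarrow> nat \<Rightarrow> real \<Rightarrow> real" where
  "aB R A k t = wk k * R^k * A^(k-1) * sqrt t^(k-1)"
definition bB :: "real \<Rightarrow> real \<Rightarrow> nat \<Rightarrow> real \<Rightarrow> real" where
  "bB R A k t = wk k * R^k * A^k * sqrt t^(k-1)"

definition Pk :: "real \<Rightarrow> real \<Rightarrow> real \<Rightarrow> real \<Rightarrow> nat \<Rightarrow> real \<Rightarrow> bool" where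
  "Pk \<mu> R N A k t \<longleftrightarrow> integrable lborel (Uhat \<mu> (phi_hat R N A) k t)
     \<and> (\<forall>\<xi>. norm (Uhat \<mu> (phi_hat R N A) k t \<xi>) \<le> aB R A k t)
     \<and> (\<integral>\<xi>. norm (Uhat \<mu> (phi_hat R N A) k t \<xi>) \<partial>lborel) \<le> bB R A k t
     \<and> (\<forall>\<xi>. \<xi> \<notin> Tset N A k \<longrightarrow> Uhat \<mu> (phi_hat R N A) k t \<xi> = 0)"

lemma aB_nonneg: "0 < R \<Longrightarrow> 0 \<le> A \<Longrightarrow> 0 \<le> t \<Longrightarrow> 0 \<le> aB R A k t"
  unfolding aB_def by (simp add: wk_nonneg)
lemma bB_nonneg: "0 < R \<Longrightarrow> 0 \<le> A \<Longrightarrow> 0 \<le> t \<Longrightarrow> 0 \<le> bB R A k t"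
  unfolding bB_def by (simp add: wk_nonneg)

lemma prod_a:
  assumes "(k1, k2, k3) \<in> Tr k" and t: "0 \<le> t"
  shows "aB R A k1 t * (bB R A k2 t * bB R A k3 t) = (wk k1 * (wk k2 * wk k3)) * (R^k * A^(k-1) * sqrt t^(k-3))"
    and "bB R A k1 t * (bB R A k2 t * bB R A k3 t) = (wk k1 * (wk k2 * wk k3)) * (R^k * A^k * sqrt t^(k-3))"
proof -
  from assms have s: "k1 + k2 + k3 = k" "1 \<le> k1" "1 \<le> k2" "1 \<le> k3" by (auto simp: Tr_def)
  have e1: "k = k1 + (k2 + k3)" using s by simp
  have e2: "k - 1 = (k1 - 1) + (k2 + k3)" using s by simp
  have e3: "k - 3 = (k1 - 1) + ((k2 - 1) + (k3 - 1))" using s by simp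
  have p1: "R^k = R^k1 * (R^k2 * R^k3)" by (simp only: e1 power_add)
  have p2: "A^(k-1) = A^(k1-1) * (A^k2 * A^k3)" by (simp only: e2 power_add)
  have p3: "sqrt t^(k-3) = sqrt t^(k1-1) * (sqrt t^(k2-1) * sqrt t^(k3-1))" by (simp only: e3 power_add)
  have p4: "A^k = A^k1 * (A^k2 * A^k3)" by (simp only: e1 power_add)
  show "aB R A k1 t * (bB R A k2 t * bB R A k3 t) = (wk k1 * (wk k2 * wk k3)) * (R^k * A^(k-1) * sqrt t^(k-3))"
    unfolding aB_def bB_def p1 p2 p3 by (simp add: mult_ac)
  show "bB R A k1 t * (bB R A k2 t * bB R A k3 t) = (wk k1 * (wk k2 * wk k3)) * (R^k * A^k * sqrt t^(k-3))"
    unfolding aB_def bB_def p1 p4 p3 by (simp add: mult_ac)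
qed


lemma phi_step:
  assumes R: "0 < R" and A: "0 < A" and q: "(k1, k2, k3) \<in> Tr k" and tau: "0 \<le> \<tau>"
    and P1: "Pk \<mu> R N A k1 \<tau>" and P2: "Pk \<mu> R N A k2 \<tau>" and P3: "Pk \<mu> R N A k3 \<tau>"
  shows "norm (Phi \<mu> (phi_hat R N A) k1 k2 k3 \<tau> \<xi>) \<le> c0^2 * (wk k1 * (wk k2 * wk k3)) * (R^k * A^(k-1) * sqrt \<tau>^(k-3))"
    and "(\<integral>\<^sup>+\<xi>. ennreal (norm (Phi \<mu> (phi_hat R N A) k1 k2 k3 \<tau> \<xi>)) \<partial>lborel)
           \<le> ennreal (c0^2 * (wk k1 * (wk k2 * wk k3)) * (R^k * A^k * sqrt \<tau>^(k-3)))"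
    and "\<xi> \<notin> Tset N A k \<Longrightarrow> Phi \<mu> (phi_hat R N A) k1 k2 k3 \<tau> \<xi> = 0"
proof -
  let ?F = "Uhat \<mu> (phi_hat R N A) k1 \<tau>"
  let ?G = "Uhat \<mu> (phi_hat R N A) k2 \<tau>"
  let ?H = "Uhat \<mu> (phi_hat R N A) k3 \<tau>"
  have F: "integrable lborel ?F" and Fb: "\<And>a. norm (?F a) \<le> aB R A k1 \<tau>"
    and NF: "(\<integral>a. norm (?F a) \<partial>lborel) \<le> bB R A k1 \<tau>" and F0: "\<And>a. a \<notin> Tset N A k1 \<Longrightarrow> ?F a = 0"
    using P1 unfolding Pk_def by auto
  have G: "integrable lborel ?G"
    and NG: "(\<integral>a. norm (?G a) \<partial>lborel) \<le> bB R A k2 \<tau>" and G0: "\<And>a. a \<notin> Tset N A k2 \<Longrightarrow> ?G a = 0"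
    using P2 unfolding Pk_def by auto
  have H: "integrable lborel ?H"
    and NH: "(\<integral>a. norm (?H a) \<partial>lborel) \<le> bB R A k3 \<tau>" and H0: "\<And>a. a \<notin> Tset N A k3 \<Longrightarrow> ?H a = 0"
    using P3 unfolding Pk_def by auto
  have nn: "0 \<le> (\<integral>a. norm (?F a) \<partial>lborel)" "0 \<le> (\<integral>a. norm (?G a) \<partial>lborel)" "0 \<le> (\<integral>a. norm (?H a) \<partial>lborel)"
    by auto
  have a0: "0 \<le> aB R A k1 \<tau>" "0 \<le> bB R A k1 \<tau>" "0 \<le> bB R A k2 \<tau>" "0 \<le> bB R A k3 \<tau>"
    using R A tau by (auto intro: aB_nonneg bB_nonneg)
  have "norm (Phi \<mu> (phi_hat R N A) k1 k2 k3 \<tau> \<xi>)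
     \<le> c0^2 * (aB R A k1 \<tau> * ((\<integral>b. norm (?G b) \<partial>lborel) * (\<integral>c. norm (?H c) \<partial>lborel)))"
    unfolding Phi_def by (rule kernel_Linf[OF F G H Fb])
  also have "\<dots> \<le> c0^2 * (aB R A k1 \<tau> * (bB R A k2 \<tau> * bB R A k3 \<tau>))"
    using nn a0 NG NH by (intro mult_left_mono mult_mono) auto
  also have "\<dots> = c0^2 * (wk k1 * (wk k2 * wk k3)) * (R^k * A^(k-1) * sqrt \<tau>^(k-3))"
    unfolding prod_a(1)[OF q tau] by simp
  finally show "norm (Phi \<mu> (phi_hat R N A) k1 k2 k3 \<tau> \<xi>) \<le> c0^2 * (wk k1 * (wk k2 * wk k3)) * (R^k * A^(k-1) * sqrt \<tau>^(k-3))" .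
  have "(\<integral>\<^sup>+\<xi>. ennreal (norm (Phi \<mu> (phi_hat R N A) k1 k2 k3 \<tau> \<xi>)) \<partial>lborel)
     \<le> ennreal (c0^2 * ((\<integral>a. norm (?F a) \<partial>lborel) * ((\<integral>b. norm (?G b) \<partial>lborel) * (\<integral>c. norm (?H c) \<partial>lborel))))"
    unfolding Phi_def by (rule kernel_L1[OF F G H])
  also have "\<dots> \<le> ennreal (c0^2 * (bB R A k1 \<tau> * (bB R A k2 \<tau> * bB R A k3 \<tau>)))"
    using nn a0 NF NG NH by (intro ennreal_leI mult_left_mono mult_mono) auto
  also have "\<dots> = ennreal (c0^2 * (wk k1 * (wk k2 * wk k3)) * (R^k * A^k * sqrt \<tau>^(k-3)))"
    unfolding prod_a(2)[OF q tau] by (simp add: mult.assoc)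
  finally show "(\<integral>\<^sup>+\<xi>. ennreal (norm (Phi \<mu> (phi_hat R N A) k1 k2 k3 \<tau> \<xi>)) \<partial>lborel)
           \<le> ennreal (c0^2 * (wk k1 * (wk k2 * wk k3)) * (R^k * A^k * sqrt \<tau>^(k-3)))" .
  assume x: "\<xi> \<notin> Tset N A k"
  show "Phi \<mu> (phi_hat R N A) k1 k2 k3 \<tau> \<xi> = 0"
    unfolding Phi_def
    by (rule kernel_supp[where ?S1.0="Tset N A k1" and ?S2.0="Tset N A k2" and ?S3.0="Tset N A k3", OF F G H A F0 G0 H0])
       (use A in \<open>auto intro!: Tset_far[OF _ q x]\<close>)
qed


lemma Tr2_empty: "Tr 2 = {}" unfolding Tr_def by auto

lemma Tr_ge3: "q \<in> Tr k \<Longrightarrow> k \<ge> 3" unfolding Tr_def by auto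

lemma sqrt_pow_t: "0 \<le> t \<Longrightarrow> k \<ge> 3 \<Longrightarrow> sqrt t^(k-3) * t = sqrt t^(k-1)"
proof -
  assume t: "0 \<le> t" and k: "k \<ge> 3"
  have e: "k - 1 = (k - 3) + 2" using k by simp
  have "sqrt t^(k-1) = sqrt t^(k-3) * sqrt t^2" by (simp only: e power_add)
  then show ?thesis using t by simp
qed

lemma Pk_1:
  assumes R: "0 < R" and A: "0 < A" and t: "0 \<le> t"
  shows "Pk \<mu> R N A 1 t"
proof -
  have U1: "Uhat \<mu> (phi_hat R N A) 1 t \<xi> = cis (- (t * \<bar>\<xi>\<bar>)) * phi_hat R N A \<xi>" for \<xi>
    using Uhat_1 by simp
  have nU: "norm (Uhat \<mu> (phi_hat R N A) 1 t \<xi>) = norm (phi_hat R N A \<xi>)" for \<xi>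
    by (simp add: U1 norm_mult)
  have "integrable lborel (\<lambda>\<xi>. cis (- (t * \<bar>\<xi>\<bar>)) * phi_hat R N A \<xi>)"
    by (rule integrable_bounded_mult[OF ph_int(1)[OF R A]]) auto
  moreover have "Uhat \<mu> (phi_hat R N A) 1 t = (\<lambda>\<xi>. cis (- (t * \<bar>\<xi>\<bar>)) * phi_hat R N A \<xi>)"
    by (rule ext) (rule U1)
  ultimately have i: "integrable lborel (Uhat \<mu> (phi_hat R N A) 1 t)" by simp
  show ?thesis unfolding Pk_def aB_def bB_def wk_def
    using i ph_norm[OF R] ph_int(2)[OF R A] ph_supp by (simp add: U1 norm_mult)
qed

lemma Pk_2:
  assumes R: "0 < R" and A: "0 < A" and t: "0 \<le> t"
  shows "Pk \<mu> R N A 2 t"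
proof -
  have U0: "Uhat \<mu> (phi_hat R N A) 2 t = (\<lambda>_. 0)"
    by (rule ext, subst Uhat_rec) (auto simp: Tr2_empty simp del: Uhat.simps)
  show ?thesis unfolding Pk_def U0 using aB_nonneg[OF R _ t] bB_nonneg[OF R _ t] A by auto
qed


lemma Pk_step:
  assumes mu: "\<bar>\<mu>\<bar> = 1" and R: "0 < R" and A: "0 < A" and t: "0 \<le> t" and k: "k \<ge> 3"
    and IH: "\<And>m \<tau>. m < k \<Longrightarrow> 1 \<le> m \<Longrightarrow> 0 \<le> \<tau> \<Longrightarrow> Pk \<mu> R N A m \<tau>"
  shows "Pk \<mu> R N A k t"
proof -
  let ?ph = "phi_hat R N A"
  define X where "X k1 k2 k3 \<xi> = (LINT \<tau>:{0..t}|lborel. cis (- ((t - \<tau>) * \<bar>\<xi>\<bar>)) * Phi \<mu> ?ph k1 k2 k3 \<tau> \<xi>)" for k1 k2 k3 \<xi>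
  define Cq where "Cq k1 k2 k3 = c0^2 * (wk k1 * (wk k2 * wk k3))" for k1 k2 k3
  have Cq0: "0 \<le> Cq k1 k2 k3" for k1 k2 k3 unfolding Cq_def by (simp add: wk_nonneg)
  have Ueq: "Uhat \<mu> ?ph k t \<xi> = - \<i> * complex_of_real \<mu> * (\<Sum>(k1,k2,k3)\<in>Tr k. X k1 k2 k3 \<xi>)" for \<xi>
    using k by (simp add: Uhat_rec X_def del: Uhat.simps)
  have Pq: "Pk \<mu> R N A k1 \<tau> \<and> Pk \<mu> R N A k2 \<tau> \<and> Pk \<mu> R N A k3 \<tau>" if "(k1,k2,k3) \<in> Tr k" "0 \<le> \<tau>" for k1 k2 k3 \<tau>
    using that by (auto simp: Tr_def intro!: IH)
  have Um[measurable]: "case_prod (Uhat \<mu> ?ph m) \<in> borel_measurable (borel \<Otimes>\<^sub>M borel)" for m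
    by (rule Uhat_meas) simp
  have Phim[measurable]: "case_prod (Phi \<mu> ?ph k1 k2 k3) \<in> borel_measurable (borel \<Otimes>\<^sub>M borel)" for k1 k2 k3
    by (rule Phi_meas; rule Um)
  have sq: "sqrt \<tau>^(k-3) \<le> sqrt t^(k-3)" if "0 \<le> \<tau>" "\<tau> \<le> t" for \<tau>
    using that by (intro power_mono) auto
  have Xb: "norm (X k1 k2 k3 \<xi>) \<le> Cq k1 k2 k3 * (R^k * A^(k-1) * sqrt t^(k-1))" if q: "(k1,k2,k3) \<in> Tr k" for k1 k2 k3 \<xi>
  proof -
    have "norm (X k1 k2 k3 \<xi>) \<le> (Cq k1 k2 k3 * (R^k * A^(k-1) * sqrt t^(k-3))) * t"
      unfolding X_def
    proof (rule TI1[OF t])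
      fix \<tau> assume tau: "0 \<le> \<tau>" "\<tau> \<le> t"
      have "norm (cis (- ((t - \<tau>) * \<bar>\<xi>\<bar>)) * Phi \<mu> ?ph k1 k2 k3 \<tau> \<xi>) = norm (Phi \<mu> ?ph k1 k2 k3 \<tau> \<xi>)"
        by (simp add: norm_mult)
      also have "\<dots> \<le> Cq k1 k2 k3 * (R^k * A^(k-1) * sqrt \<tau>^(k-3))"
        unfolding Cq_def using phi_step(1)[OF R A q tau(1)] Pq[OF q tau(1)] by auto
      also have "\<dots> \<le> Cq k1 k2 k3 * (R^k * A^(k-1) * sqrt t^(k-3))"
        using R A sq[OF tau] Cq0 by (intro mult_left_mono) auto
      finally show "norm (cis (- ((t - \<tau>) * \<bar>\<xi>\<bar>)) * Phi \<mu> ?ph k1 k2 k3 \<tau> \<xi>) \<le> Cq k1 k2 k3 * (R^k * A^(k-1) * sqrt t^(k-3))" .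
    qed
    also have "\<dots> = Cq k1 k2 k3 * (R^k * A^(k-1) * sqrt t^(k-1))"
      using sqrt_pow_t[OF t k] by (simp add: mult_ac)
    finally show ?thesis .
  qed
  have Xm[measurable]: "X k1 k2 k3 \<in> borel_measurable borel" for k1 k2 k3
    unfolding X_def set_int_Icc by measurable
  have XL: "(\<integral>\<^sup>+\<xi>. ennreal (norm (X k1 k2 k3 \<xi>)) \<partial>lborel) \<le> ennreal (Cq k1 k2 k3 * (R^k * A^k * sqrt t^(k-1)))"
    if q: "(k1,k2,k3) \<in> Tr k" for k1 k2 k3
  proof -
    have "(\<integral>\<^sup>+\<xi>. ennreal (norm (X k1 k2 k3 \<xi>)) \<partial>lborel) \<le> ennreal ((Cq k1 k2 k3 * (R^k * A^k * sqrt t^(k-3))) * t)"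
      unfolding X_def
    proof (rule TI2[OF t])
      show "(\<lambda>(\<tau>, \<xi>). cis (- ((t - \<tau>) * \<bar>\<xi>\<bar>)) * Phi \<mu> ?ph k1 k2 k3 \<tau> \<xi>) \<in> borel_measurable (borel \<Otimes>\<^sub>M borel)"
        by measurable
      show "0 \<le> Cq k1 k2 k3 * (R^k * A^k * sqrt t^(k-3))" using Cq0 R A t by simp
      fix \<tau> assume tau: "0 \<le> \<tau>" "\<tau> \<le> t"
      have "(\<integral>\<^sup>+\<xi>. ennreal (norm (cis (- ((t - \<tau>) * \<bar>\<xi>\<bar>)) * Phi \<mu> ?ph k1 k2 k3 \<tau> \<xi>)) \<partial>lborel)
          = (\<integral>\<^sup>+\<xi>. ennreal (norm (Phi \<mu> ?ph k1 k2 k3 \<tau> \<xi>)) \<partial>lborel)"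
        by (simp add: norm_mult)
      also have "\<dots> \<le> ennreal (Cq k1 k2 k3 * (R^k * A^k * sqrt \<tau>^(k-3)))"
        unfolding Cq_def using phi_step(2)[OF R A q tau(1)] Pq[OF q tau(1)] by auto
      also have "\<dots> \<le> ennreal (Cq k1 k2 k3 * (R^k * A^k * sqrt t^(k-3)))"
        using R A sq[OF tau] Cq0 by (intro ennreal_leI mult_left_mono) auto
      finally show "(\<integral>\<^sup>+\<xi>. ennreal (norm (cis (- ((t - \<tau>) * \<bar>\<xi>\<bar>)) * Phi \<mu> ?ph k1 k2 k3 \<tau> \<xi>)) \<partial>lborel)
          \<le> ennreal (Cq k1 k2 k3 * (R^k * A^k * sqrt t^(k-3)))" .
    qed
    also have "(Cq k1 k2 k3 * (R^k * A^k * sqrt t^(k-3))) * t = Cq k1 k2 k3 * (R^k * A^k * sqrt t^(k-1))"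
      using sqrt_pow_t[OF t k] by (simp add: mult_ac)
    finally show ?thesis .
  qed
  have Xs: "X k1 k2 k3 \<xi> = 0" if q: "(k1,k2,k3) \<in> Tr k" and x: "\<xi> \<notin> Tset N A k" for k1 k2 k3 \<xi>
  proof -
    have fz: "(\<lambda>\<tau>. if 0 \<le> \<tau> \<and> \<tau> \<le> t then cis (- ((t - \<tau>) * \<bar>\<xi>\<bar>)) * Phi \<mu> ?ph k1 k2 k3 \<tau> \<xi> else 0) = (\<lambda>\<tau>. 0)"
    proof (rule ext)
      fix \<tau>
      show "(if 0 \<le> \<tau> \<and> \<tau> \<le> t then cis (- ((t - \<tau>) * \<bar>\<xi>\<bar>)) * Phi \<mu> ?ph k1 k2 k3 \<tau> \<xi> else 0) = 0"
      proof (cases "0 \<le> \<tau> \<and> \<tau> \<le> t")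
        case True
        then have "Phi \<mu> ?ph k1 k2 k3 \<tau> \<xi> = 0"
          using phi_step(3)[OF R A q _ _ _ _ x] Pq[OF q] by auto
        then show ?thesis by simp
      qed auto
    qed
    show ?thesis unfolding X_def set_int_Icc fz by simp
  qed
  have sumC: "(\<Sum>(k1,k2,k3)\<in>Tr k. Cq k1 k2 k3) \<le> wk k"
    unfolding Cq_def using wsum[OF k] by (simp add: split_def)
  have nU: "norm (Uhat \<mu> ?ph k t \<xi>) \<le> (\<Sum>(k1,k2,k3)\<in>Tr k. norm (X k1 k2 k3 \<xi>))" for \<xi>
  proof -
    have "norm (Uhat \<mu> ?ph k t \<xi>) = norm (\<Sum>(k1,k2,k3)\<in>Tr k. X k1 k2 k3 \<xi>)"
      unfolding Ueq using mu by (simp add: norm_mult del: Uhat.simps)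
    also have "\<dots> \<le> (\<Sum>(k1,k2,k3)\<in>Tr k. norm (X k1 k2 k3 \<xi>))"
      by (rule order.trans[OF norm_sum]) (simp add: split_def)
    finally show ?thesis .
  qed
  have linf: "norm (Uhat \<mu> ?ph k t \<xi>) \<le> aB R A k t" for \<xi>
  proof -
    have "(\<Sum>(k1,k2,k3)\<in>Tr k. norm (X k1 k2 k3 \<xi>)) \<le> (\<Sum>(k1,k2,k3)\<in>Tr k. Cq k1 k2 k3 * (R^k * A^(k-1) * sqrt t^(k-1)))"
      by (rule sum_mono) (auto intro: Xb[simplified])
    also have "\<dots> = (\<Sum>(k1,k2,k3)\<in>Tr k. Cq k1 k2 k3) * (R^k * A^(k-1) * sqrt t^(k-1))"
      by (simp add: sum_distrib_right split_def)
    also have "\<dots> \<le> wk k * (R^k * A^(k-1) * sqrt t^(k-1))"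
      using sumC R A t by (intro mult_right_mono) auto
    finally show ?thesis using nU[of \<xi>] unfolding aB_def by (simp add: mult_ac)
  qed
  have Ukm: "Uhat \<mu> ?ph k t \<in> borel_measurable borel" by measurable
  have nnU: "(\<integral>\<^sup>+\<xi>. ennreal (norm (Uhat \<mu> ?ph k t \<xi>)) \<partial>lborel) \<le> ennreal (bB R A k t)"
  proof -
    have "(\<integral>\<^sup>+\<xi>. ennreal (norm (Uhat \<mu> ?ph k t \<xi>)) \<partial>lborel)
        \<le> (\<integral>\<^sup>+\<xi>. (\<Sum>q\<in>Tr k. ennreal (norm (X (fst q) (fst (snd q)) (snd (snd q)) \<xi>))) \<partial>lborel)"
      by (intro nn_integral_mono order.trans[OF ennreal_leI[OF nU]]) (simp add: split_def sum_ennreal)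
    also have "\<dots> = (\<Sum>q\<in>Tr k. (\<integral>\<^sup>+\<xi>. ennreal (norm (X (fst q) (fst (snd q)) (snd (snd q)) \<xi>)) \<partial>lborel))"
      by (rule nn_integral_sum) measurable
    also have "\<dots> \<le> (\<Sum>q\<in>Tr k. ennreal (Cq (fst q) (fst (snd q)) (snd (snd q)) * (R^k * A^k * sqrt t^(k-1))))"
      by (rule sum_mono) (auto intro: XL[simplified])
    also have "\<dots> = ennreal (\<Sum>q\<in>Tr k. Cq (fst q) (fst (snd q)) (snd (snd q)) * (R^k * A^k * sqrt t^(k-1)))"
      using Cq0 R A t by (subst sum_ennreal) auto
    also have "\<dots> \<le> ennreal (bB R A k t)"
    proof (intro ennreal_leI)
      have "(\<Sum>q\<in>Tr k. Cq (fst q) (fst (snd q)) (snd (snd q)) * (R^k * A^k * sqrt t^(k-1)))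
          = (\<Sum>(k1,k2,k3)\<in>Tr k. Cq k1 k2 k3) * (R^k * A^k * sqrt t^(k-1))"
        by (simp add: sum_distrib_right split_def)
      also have "\<dots> \<le> wk k * (R^k * A^k * sqrt t^(k-1))"
        using sumC R A t by (intro mult_right_mono) auto
      finally show "(\<Sum>q\<in>Tr k. Cq (fst q) (fst (snd q)) (snd (snd q)) * (R^k * A^k * sqrt t^(k-1))) \<le> bB R A k t"
        unfolding bB_def by (simp add: mult_ac)
    qed
    finally show ?thesis .
  qed
  have int: "integrable lborel (Uhat \<mu> ?ph k t)"
  proof (rule integrableI_bounded)
    show "Uhat \<mu> ?ph k t \<in> borel_measurable lborel" using Ukm by simp
    show "(\<integral>\<^sup>+\<xi>. ennreal (norm (Uhat \<mu> ?ph k t \<xi>)) \<partial>lborel) < \<infinity>"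
      using nnU by (simp add: le_less_trans)
  qed
  have l1: "(\<integral>\<xi>. norm (Uhat \<mu> ?ph k t \<xi>) \<partial>lborel) \<le> bB R A k t"
    using nnU unfolding nn_norm_eq[OF int] using bB_nonneg[OF R _ t] A by (simp add: ennreal_le_iff)
  have supp: "Uhat \<mu> ?ph k t \<xi> = 0" if "\<xi> \<notin> Tset N A k" for \<xi>
    unfolding Ueq using that Xs by (simp add: split_def)
  show ?thesis unfolding Pk_def using int linf l1 supp by blast
qed


lemma main_Pk:
  assumes mu: "\<bar>\<mu>\<bar> = 1" and R: "0 < R" and A: "0 < A"
  shows "1 \<le> k \<Longrightarrow> 0 \<le> t \<Longrightarrow> Pk \<mu> R N A k t"
proof (induction k arbitrary: t rule: less_induct)
  case (less k)
  consider "k = 1" | "k = 2" | "k \<ge> 3" using less.prems by linarith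
  then show ?case
  proof cases
    case 1 then show ?thesis using Pk_1[OF R A less.prems(2)] by simp
  next
    case 2 then show ?thesis using Pk_2[OF R A less.prems(2)] by simp
  next
    case 3
    show ?thesis by (rule Pk_step[OF mu R A less.prems(2) 3 less.IH])
  qed
qed


definition wt :: "real \<Rightarrow> real \<Rightarrow> real" where
  "wt s \<xi> = sqrt (1 + \<xi>\<^sup>2) powr (2 * s)"

lemma pos1sq[simp]: "0 < 1 + (x::real)\<^sup>2" by (simp add: add_pos_nonneg)
lemma pos1sq'[simp]: "1 + (x::real)\<^sup>2 \<noteq> 0" using pos1sq[of x] by linarith

lemma wt_meas[measurable]: "wt s \<in> borel_measurable borel"
  unfolding wt_def by measurable

lemma wt_pos: "0 < wt s \<xi>" unfolding wt_def by simp

lemma wt_mono: assumes s: "s \<le> 0" and h: "\<bar>\<eta>\<bar> \<le> \<bar>\<xi>\<bar>" shows "wt s \<xi> \<le> wt s \<eta>"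
proof -
  have "\<eta>\<^sup>2 \<le> \<xi>\<^sup>2" using h by (metis abs_le_square_iff)
  then have "sqrt (1 + \<eta>\<^sup>2) \<le> sqrt (1 + \<xi>\<^sup>2)" by simp
  then show ?thesis unfolding wt_def using s by (intro powr_mono2') auto
qed

lemma wt_le1: "s \<le> 0 \<Longrightarrow> wt s \<xi> \<le> 1"
  using wt_mono[of s 0 \<xi>] by (simp add: wt_def)

lemma wt_le_pow: assumes s: "s \<le> 0" and x: "\<xi> \<noteq> 0" shows "wt s \<xi> \<le> \<bar>\<xi>\<bar> powr (2 * s)"
proof -
  have "\<bar>\<xi>\<bar> \<le> sqrt (1 + \<xi>\<^sup>2)" by (metis real_sqrt_abs real_sqrt_le_mono le_add_same_cancel2 zero_le_one)
  then show ?thesis unfolding wt_def using s x by (intro powr_mono2') auto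
qed

lemma rearr:
  fixes w :: "real \<Rightarrow> real"
  assumes [measurable]: "w \<in> borel_measurable borel" and mono: "\<And>\<xi> \<eta>. \<bar>\<eta>\<bar> \<le> \<bar>\<xi>\<bar> \<Longrightarrow> w \<xi> \<le> w \<eta>"
    and r: "0 \<le> \<rho>"
  shows "(\<integral>\<^sup>+\<xi>. ennreal (w \<xi>) * indicator {c - \<rho> .. c + \<rho>} \<xi> \<partial>lborel) \<le> (\<integral>\<^sup>+\<xi>. ennreal (w \<xi>) * indicator {- \<rho> .. \<rho>} \<xi> \<partial>lborel)"
proof -
  define I where "I = {c - \<rho> .. c + \<rho>}"
  define J where "J = {- \<rho> .. \<rho>}"
  have [measurable]: "I \<in> sets borel" "J \<in> sets borel" unfolding I_def J_def by auto
  have split: "(\<integral>\<^sup>+\<xi>. ennreal (w \<xi>) * indicator X \<xi> \<partial>lborel)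
     = (\<integral>\<^sup>+\<xi>. ennreal (w \<xi>) * indicator (X \<inter> Y) \<xi> \<partial>lborel) + (\<integral>\<^sup>+\<xi>. ennreal (w \<xi>) * indicator (X - Y) \<xi> \<partial>lborel)"
    if [measurable]: "X \<in> sets borel" "Y \<in> sets borel" for X Y
  proof -
    have "(\<lambda>\<xi>. ennreal (w \<xi>) * indicator X \<xi>) = (\<lambda>\<xi>. ennreal (w \<xi>) * indicator (X \<inter> Y) \<xi> + ennreal (w \<xi>) * indicator (X - Y) \<xi>)"
      by (auto simp: indicator_def fun_eq_iff)
    then show ?thesis by (simp add: nn_integral_add)
  qed
  have mI: "emeasure lborel I = ennreal (2 * \<rho>)" unfolding I_def using r by simp
  have mJ: "emeasure lborel J = ennreal (2 * \<rho>)" unfolding J_def using r by simp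
  have mIJ: "emeasure lborel (I \<inter> J) + emeasure lborel (I - J) = emeasure lborel I"
    by (subst plus_emeasure) (auto intro: arg_cong[where f="emeasure lborel"])
  have mJI: "emeasure lborel (I \<inter> J) + emeasure lborel (J - I) = emeasure lborel J"
    by (subst plus_emeasure) (auto intro: arg_cong[where f="emeasure lborel"])
  have fin: "emeasure lborel (I \<inter> J) \<noteq> \<infinity>"
  proof -
    have "emeasure lborel (I \<inter> J) \<le> emeasure lborel J" by (intro emeasure_mono) auto
    then show ?thesis using mJ by (auto simp: top_unique)
  qed
  have eqm: "emeasure lborel (I - J) = emeasure lborel (J - I)"
    using mIJ mJI mI mJ fin by (metis ennreal_add_left_cancel)
  have a: "(\<integral>\<^sup>+\<xi>. ennreal (w \<xi>) * indicator (I - J) \<xi> \<partial>lborel) \<le> (\<integral>\<^sup>+\<xi>. ennreal (w \<rho>) * indicator (I - J) \<xi> \<partial>lborel)"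
  proof (intro nn_integral_mono)
    fix \<xi>
    show "ennreal (w \<xi>) * indicator (I - J) \<xi> \<le> ennreal (w \<rho>) * indicator (I - J) \<xi>"
    proof (cases "\<xi> \<in> I - J")
      case True
      then have "\<bar>\<rho>\<bar> \<le> \<bar>\<xi>\<bar>" unfolding J_def using r by auto
      then show ?thesis using True mono by (auto intro: ennreal_leI)
    qed simp
  qed
  have b: "(\<integral>\<^sup>+\<xi>. ennreal (w \<rho>) * indicator (J - I) \<xi> \<partial>lborel) \<le> (\<integral>\<^sup>+\<xi>. ennreal (w \<xi>) * indicator (J - I) \<xi> \<partial>lborel)"
  proof (intro nn_integral_mono)
    fix \<xi>
    show "ennreal (w \<rho>) * indicator (J - I) \<xi> \<le> ennreal (w \<xi>) * indicator (J - I) \<xi>"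
    proof (cases "\<xi> \<in> J - I")
      case True
      then have "\<bar>\<xi>\<bar> \<le> \<bar>\<rho>\<bar>" unfolding J_def using r by auto
      then show ?thesis using True mono by (auto intro: ennreal_leI)
    qed simp
  qed
  have c: "(\<integral>\<^sup>+\<xi>. ennreal (w \<rho>) * indicator (I - J) \<xi> \<partial>lborel) = (\<integral>\<^sup>+\<xi>. ennreal (w \<rho>) * indicator (J - I) \<xi> \<partial>lborel)"
    by (simp add: nn_integral_cmult_indicator eqm)
  have "(\<integral>\<^sup>+\<xi>. ennreal (w \<xi>) * indicator I \<xi> \<partial>lborel)
      = (\<integral>\<^sup>+\<xi>. ennreal (w \<xi>) * indicator (I \<inter> J) \<xi> \<partial>lborel) + (\<integral>\<^sup>+\<xi>. ennreal (w \<xi>) * indicator (I - J) \<xi> \<partial>lborel)"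
    by (rule split) auto
  also have "\<dots> \<le> (\<integral>\<^sup>+\<xi>. ennreal (w \<xi>) * indicator (J \<inter> I) \<xi> \<partial>lborel) + (\<integral>\<^sup>+\<xi>. ennreal (w \<xi>) * indicator (J - I) \<xi> \<partial>lborel)"
    using a b c by (intro add_mono) (auto simp: Int_commute)
  also have "\<dots> = (\<integral>\<^sup>+\<xi>. ennreal (w \<xi>) * indicator J \<xi> \<partial>lborel)"
    by (rule split[symmetric]) auto
  finally show ?thesis unfolding I_def J_def .
qed


lemma T_bound:
  assumes s: "s \<le> 0" and A: "0 < A" and k: "1 \<le> k"
  shows "(\<integral>\<^sup>+\<xi>. ennreal (wt s \<xi>) * indicator (Tset N A k) \<xi> \<partial>lborel)
     \<le> of_nat (4 * k + 1) * (\<integral>\<^sup>+\<xi>. ennreal (wt s \<xi>) * indicator {- ((real k - 1/2) * A) .. (real k - 1/2) * A} \<xi> \<partial>lborel)"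
proof -
  define \<rho> where "\<rho> = (real k - 1/2) * A"
  have r: "0 \<le> \<rho>" unfolding \<rho>_def using A k by simp
  define Jset where "Jset = {- 2 * int k .. 2 * int k}"
  have fin: "finite Jset" unfolding Jset_def by simp
  have ind: "indicator (Tset N A k) \<xi> \<le> (\<Sum>j\<in>Jset. indicator {of_int j * N - \<rho> .. of_int j * N + \<rho>} \<xi> :: ennreal)" for \<xi>
  proof (cases "\<xi> \<in> Tset N A k")
    case True
    then obtain j where j: "\<bar>j\<bar> \<le> 2 * int k" "\<bar>\<xi> - of_int j * N\<bar> \<le> \<rho>" unfolding Tset_def \<rho>_def by auto
    have jJ: "j \<in> Jset" unfolding Jset_def using j by auto
    have "indicator (Tset N A k) \<xi> = (indicator {of_int j * N - \<rho> .. of_int j * N + \<rho>} \<xi> :: ennreal)"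
      using True j by (auto simp: indicator_def abs_le_iff)
    also have "\<dots> \<le> (\<Sum>j\<in>Jset. indicator {of_int j * N - \<rho> .. of_int j * N + \<rho>} \<xi>)"
      by (rule member_le_sum[OF jJ _ fin]) auto
    finally show ?thesis .
  qed simp
  have "(\<integral>\<^sup>+\<xi>. ennreal (wt s \<xi>) * indicator (Tset N A k) \<xi> \<partial>lborel)
      \<le> (\<integral>\<^sup>+\<xi>. (\<Sum>j\<in>Jset. ennreal (wt s \<xi>) * indicator {of_int j * N - \<rho> .. of_int j * N + \<rho>} \<xi>) \<partial>lborel)"
    by (intro nn_integral_mono) (auto simp: sum_distrib_left[symmetric] intro: mult_left_mono ind)
  also have "\<dots> = (\<Sum>j\<in>Jset. (\<integral>\<^sup>+\<xi>. ennreal (wt s \<xi>) * indicator {of_int j * N - \<rho> .. of_int j * N + \<rho>} \<xi> \<partial>lborel))"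
    by (rule nn_integral_sum) auto
  also have "\<dots> \<le> (\<Sum>j\<in>Jset. (\<integral>\<^sup>+\<xi>. ennreal (wt s \<xi>) * indicator {- \<rho> .. \<rho>} \<xi> \<partial>lborel))"
    by (intro sum_mono rearr wt_mono s r) auto
  also have "\<dots> = of_nat (card Jset) * (\<integral>\<^sup>+\<xi>. ennreal (wt s \<xi>) * indicator {- \<rho> .. \<rho>} \<xi> \<partial>lborel)"
    by simp
  also have "card Jset = 4 * k + 1" unfolding Jset_def by simp
  finally show ?thesis unfolding \<rho>_def .
qed


lemma V_split:
  assumes s: "s \<le> 0" and r: "1 \<le> \<rho>"
  shows "(\<integral>\<^sup>+\<xi>. ennreal (wt s \<xi>) * indicator {- \<rho> .. \<rho>} \<xi> \<partial>lborel)
    \<le> 2 + 2 * (\<integral>\<^sup>+x. ennreal (x powr (2 * s)) * indicator {1 .. \<rho>} x \<partial>lborel)"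
proof -
  define g where "g x = ennreal (x powr (2 * s)) * indicator {1 .. \<rho>} x" for x
  have gm[measurable]: "g \<in> borel_measurable borel" unfolding g_def by measurable
  have pt: "ennreal (wt s \<xi>) * indicator {- \<rho> .. \<rho>} \<xi> \<le> indicator {-1 .. 1} \<xi> + (g \<xi> + g (- \<xi>))" for \<xi>
  proof -
    consider "\<bar>\<xi>\<bar> \<le> 1" | "1 < \<xi>" | "\<xi> < -1" by linarith
    then show ?thesis
    proof cases
      case 1
      then have "ennreal (wt s \<xi>) * indicator {- \<rho> .. \<rho>} \<xi> \<le> indicator {-1 .. 1} \<xi>"
        using wt_le1[OF s, of \<xi>] by (auto simp: indicator_def abs_le_iff intro: ennreal_leI)
      then show ?thesis by (rule order.trans) simp
    next
      case 2
      have "ennreal (wt s \<xi>) * indicator {- \<rho> .. \<rho>} \<xi> \<le> g \<xi>"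
        unfolding g_def using 2 wt_le_pow[OF s, of \<xi>] by (auto simp: indicator_def intro: ennreal_leI)
      then show ?thesis by (rule order.trans) (simp add: add_increasing)
    next
      case 3
      have "ennreal (wt s \<xi>) * indicator {- \<rho> .. \<rho>} \<xi> \<le> g (- \<xi>)"
        unfolding g_def using 3 wt_le_pow[OF s, of \<xi>] by (auto simp: indicator_def intro: ennreal_leI)
      then show ?thesis by (rule order.trans) (simp add: add_increasing2)
    qed
  qed
  have refl: "(\<integral>\<^sup>+x. g (- x) \<partial>lborel) = (\<integral>\<^sup>+x. g x \<partial>lborel)"
    using nn_integral_real_affine[OF gm, of "-1" 0] by simp
  have "(\<integral>\<^sup>+\<xi>. ennreal (wt s \<xi>) * indicator {- \<rho> .. \<rho>} \<xi> \<partial>lborel)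
      \<le> (\<integral>\<^sup>+\<xi>. indicator {-1 .. 1} \<xi> + (g \<xi> + g (- \<xi>)) \<partial>lborel)"
    by (intro nn_integral_mono pt)
  also have "\<dots> = 2 + ((\<integral>\<^sup>+x. g x \<partial>lborel) + (\<integral>\<^sup>+x. g (- x) \<partial>lborel))"
    by (simp add: nn_integral_add)
  also have "\<dots> = 2 + 2 * (\<integral>\<^sup>+x. g x \<partial>lborel)"
    unfolding refl by (simp add: mult_2)
  finally show ?thesis unfolding g_def .
qed

lemma FTC_pow:
  assumes r: "1 \<le> \<rho>" and p: "2 * s + 1 \<noteq> 0"
  shows "(\<integral>\<^sup>+x. ennreal (x powr (2 * s)) * indicator {1 .. \<rho>} x \<partial>lborel) = ennreal ((\<rho> powr (2 * s + 1) - 1) / (2 * s + 1))"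
proof -
  have "(\<integral>\<^sup>+x. ennreal (x powr (2 * s)) * indicator {1 .. \<rho>} x \<partial>lborel)
     = ennreal ((\<lambda>x. x powr (2 * s + 1) / (2 * s + 1)) \<rho> - (\<lambda>x. x powr (2 * s + 1) / (2 * s + 1)) 1)"
  proof (rule nn_integral_FTC_Icc)
    show "(\<lambda>x. x powr (2 * s)) \<in> borel_measurable borel" by measurable
    fix x assume x: "x \<in> {1..\<rho>}"
    then have x0: "0 < x" by auto
    have "((\<lambda>x. x powr (2 * s + 1)) has_real_derivative (2 * s + 1) * x powr (2 * s + 1 - 1)) (at x)"
      by (rule has_real_derivative_powr[OF x0])
    then have "((\<lambda>x. x powr (2 * s + 1) / (2 * s + 1)) has_real_derivative (2 * s + 1) * x powr (2 * s + 1 - 1) / (2 * s + 1)) (at x)"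
      by (rule DERIV_cdivide)
    then show "((\<lambda>x. x powr (2 * s + 1) / (2 * s + 1)) has_real_derivative x powr (2 * s)) (at x)"
      using p by simp
    show "0 \<le> x powr (2 * s)" by simp
  qed (use r in auto)
  then show ?thesis by (simp add: diff_divide_distrib)
qed

lemma FTC_ln:
  assumes r: "1 \<le> \<rho>"
  shows "(\<integral>\<^sup>+x. ennreal (x powr (2 * (-1/2::real))) * indicator {1 .. \<rho>} x \<partial>lborel) = ennreal (ln \<rho>)"
proof -
  have "(\<integral>\<^sup>+x. ennreal (x powr (2 * (-1/2::real))) * indicator {1 .. \<rho>} x \<partial>lborel) = ennreal (ln \<rho> - ln 1)"
  proof (rule nn_integral_FTC_Icc)
    show "(\<lambda>x. x powr (2 * (-1/2::real))) \<in> borel_measurable borel" by measurable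
    fix x assume x: "x \<in> {1..\<rho>}"
    then have x0: "0 < x" by auto
    have "(ln has_real_derivative inverse x) (at x)" using x0 by (rule DERIV_ln)
    moreover have "x powr (2 * (-1/2::real)) = inverse x" using x0 by (simp add: powr_minus)
    ultimately show "(ln has_real_derivative x powr (2 * (-1/2::real))) (at x)" by simp
    show "0 \<le> x powr (2 * (-1/2::real))" by simp
  qed (use r in auto)
  then show ?thesis by simp
qed


lemma e22: "0 \<le> X \<Longrightarrow> ennreal (2 + 2 * X) = 2 + 2 * ennreal X"
proof -
  assume X: "0 \<le> X"
  have "ennreal (2 + 2 * X) = ennreal 2 + ennreal (2 * X)" using X by (intro ennreal_plus) auto
  also have "ennreal (2 * X) = ennreal 2 * ennreal X" using X by (intro ennreal_mult) auto
  finally show ?thesis by simp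
qed

definition Ks :: "real \<Rightarrow> real" where
  "Ks s = (if s > -1/2 then 2 + 2 / (2 * s + 1) else if s = -1/2 then 10 else 2 + 2 / (- (2 * s + 1)))"

lemma ln2_half: "1/2 \<le> ln (2::real)"
proof -
  have "1 < ln (272/100::real)" by (rule ln_272_gt_1)
  also have "\<dots> \<le> ln 4" by simp
  also have "ln (4::real) = 2 * ln 2" using ln_realpow[of 2 2] by simp
  finally show ?thesis by simp
qed

lemma V_bound:
  assumes s: "s \<le> 0" and A: "2 \<le> A" and k: "1 \<le> k"
  shows "(\<integral>\<^sup>+\<xi>. ennreal (wt s \<xi>) * indicator {- ((real k - 1/2) * A) .. (real k - 1/2) * A} \<xi> \<partial>lborel)
     \<le> ennreal (Ks s * real k * (gA s A)\<^sup>2)"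
proof -
  define \<rho> where "\<rho> = (real k - 1/2) * A"
  have rk: "real k \<ge> 1" using k by simp
  have "(1/2) * 2 \<le> (real k - 1/2) * A" using A rk by (intro mult_mono) auto
  then have r1: "1 \<le> \<rho>" unfolding \<rho>_def by simp
  have rle: "\<rho> \<le> real k * A" unfolding \<rho>_def using A by (simp add: algebra_simps)
  have VS: "(\<integral>\<^sup>+\<xi>. ennreal (wt s \<xi>) * indicator {- \<rho> .. \<rho>} \<xi> \<partial>lborel)
    \<le> 2 + 2 * (\<integral>\<^sup>+x. ennreal (x powr (2 * s)) * indicator {1 .. \<rho>} x \<partial>lborel)"
    by (rule V_split[OF s r1])
  consider "s > -1/2" | "s = -1/2" | "s < -1/2" by linarith
  then show ?thesis
  proof cases
    case 1
    define p where "p = 2 * s + 1"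
    have p: "0 < p" "p \<le> 1" unfolding p_def using 1 s by auto
    have X0: "0 \<le> (\<rho> powr p - 1) / p" using p r1 by (simp add: ge_one_powr_ge_zero)
    have "(\<rho> powr p - 1) / p \<le> \<rho> powr p / p" using p by (simp add: divide_right_mono)
    also have "\<rho> powr p \<le> (real k * A) powr p" using p r1 rle by (intro powr_mono2) auto
    also have "(real k * A) powr p = real k powr p * A powr p" using A by (simp add: powr_mult)
    also have "real k powr p \<le> real k" using powr_mono[of p 1 "real k"] rk p by simp
    finally have X1: "(\<rho> powr p - 1) / p \<le> real k * A powr p / p" using p A
      by (smt (verit) divide_right_mono mult_right_mono powr_ge_zero)
    have Ap: "1 \<le> A powr p" using A p by (simp add: ge_one_powr_ge_zero)
    have kA: "1 * 1 \<le> real k * A powr p" using rk Ap by (intro mult_mono) auto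
    have "2 + 2 * ((\<rho> powr p - 1) / p) \<le> 2 * (real k * A powr p) + 2 * (real k * A powr p / p)"
      using X1 kA by linarith
    also have "\<dots> = Ks s * real k * (gA s A)\<^sup>2"
    proof -
      have "(A powr (s + 1/2))\<^sup>2 = A powr (s + 1/2) * A powr (s + 1/2)" by (simp add: power2_eq_square)
      also have "\<dots> = A powr p" unfolding p_def by (simp add: powr_add[symmetric])
      finally have "(gA s A)\<^sup>2 = A powr p" unfolding gA_def using 1 by simp
      then show ?thesis unfolding Ks_def p_def using 1 by (simp add: field_simps)
    qed
    finally have fin: "2 + 2 * ((\<rho> powr p - 1) / p) \<le> Ks s * real k * (gA s A)\<^sup>2" .
    have "(\<integral>\<^sup>+x. ennreal (x powr (2 * s)) * indicator {1 .. \<rho>} x \<partial>lborel) = ennreal ((\<rho> powr p - 1) / p)"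
      unfolding p_def by (rule FTC_pow[OF r1]) (use 1 in simp)
    with VS have "(\<integral>\<^sup>+\<xi>. ennreal (wt s \<xi>) * indicator {- \<rho> .. \<rho>} \<xi> \<partial>lborel) \<le> ennreal (2 + 2 * ((\<rho> powr p - 1) / p))"
      using X0 by (simp only: e22)
    also have "\<dots> \<le> ennreal (Ks s * real k * (gA s A)\<^sup>2)" by (rule ennreal_leI[OF fin])
    finally show ?thesis unfolding \<rho>_def .
  next
    case 2
    have lA: "1/2 \<le> ln A" using ln2_half A by (smt (verit) ln_le_cancel_iff)
    have X0: "0 \<le> ln \<rho>" using r1 by simp
    have "ln \<rho> \<le> ln (real k * A)" using r1 rle by simp
    also have "\<dots> = ln (real k) + ln A" using rk A by (simp add: ln_mult)
    also have "ln (real k) \<le> real k" using rk by (smt (verit) ln_le_minus_one)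
    finally have X1: "ln \<rho> \<le> real k + ln A" by simp
    have "2 + 2 * ln \<rho> \<le> 10 * real k * ln A"
    proof -
      have "2 \<le> 4 * ln A" using lA by simp
      moreover have "2 * real k \<le> 4 * real k * ln A" using lA rk by (simp add: mult_left_mono[of "1/2" "ln A" "4 * real k", simplified])
      moreover have "2 * ln A \<le> 2 * real k * ln A" using lA rk by (simp add: mult_right_mono[of 1 "real k" "ln A", simplified])
      moreover have "4 * ln A \<le> 4 * real k * ln A" using lA rk by (simp add: mult_right_mono[of 1 "real k" "ln A", simplified])
      ultimately show ?thesis using X1 by linarith
    qed
    also have "\<dots> = Ks s * real k * (gA s A)\<^sup>2"
    proof -
      have "0 < ln A" using lA by simp
      then have "(gA s A)\<^sup>2 = ln A" unfolding gA_def using 2 by (simp add: powr_half_sqrt)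
      then show ?thesis unfolding Ks_def using 2 by simp
    qed
    finally have fin: "2 + 2 * ln \<rho> \<le> Ks s * real k * (gA s A)\<^sup>2" .
    have "(\<integral>\<^sup>+x. ennreal (x powr (2 * s)) * indicator {1 .. \<rho>} x \<partial>lborel) = ennreal (ln \<rho>)"
      using FTC_ln[OF r1] 2 by simp
    with VS have "(\<integral>\<^sup>+\<xi>. ennreal (wt s \<xi>) * indicator {- \<rho> .. \<rho>} \<xi> \<partial>lborel) \<le> ennreal (2 + 2 * ln \<rho>)"
      using X0 by (simp only: e22)
    also have "\<dots> \<le> ennreal (Ks s * real k * (gA s A)\<^sup>2)" by (rule ennreal_leI[OF fin])
    finally show ?thesis unfolding \<rho>_def .
  next
    case 3
    define p where "p = 2 * s + 1"
    have p: "p < 0" unfolding p_def using 3 by auto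
    have X0: "0 \<le> (\<rho> powr p - 1) / p" using p r1
      by (intro divide_nonpos_neg) (auto intro: powr_le_one_le simp: powr_mono2' [of p 1 \<rho>, simplified])
    have "(\<rho> powr p - 1) / p = (1 - \<rho> powr p) / (- p)" using p by (simp add: field_simps)
    also have "\<dots> \<le> 1 / (- p)"
      by (rule divide_right_mono) (use p in auto)
    finally have X1: "(\<rho> powr p - 1) / p \<le> 1 / (- p)" .
    have "2 + 2 * ((\<rho> powr p - 1) / p) \<le> (2 + 2 / (- p)) * real k"
    proof -
      have "0 < 2 / (- p)" using p by (intro divide_pos_pos) auto
      then have h0: "0 \<le> 2 + 2 / (- p)" by linarith
      have h1: "(2 + 2 / (- p)) * 1 \<le> (2 + 2 / (- p)) * real k" using rk h0 by (intro mult_left_mono) auto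
      have h2: "2 + 2 * ((\<rho> powr p - 1) / p) \<le> 2 + 2 * (1 / (- p))" using X1 by linarith
      have h3: "2 * (1 / (- p)) = 2 / (- p)" by simp
      have h4: "(2 + 2 / (- p)) * 1 = 2 + 2 / (- p)" by simp
      show ?thesis using h1 h2 h3 h4 by linarith
    qed
    also have "\<dots> = Ks s * real k * (gA s A)\<^sup>2"
      unfolding Ks_def gA_def p_def using 3 by simp
    finally have fin: "2 + 2 * ((\<rho> powr p - 1) / p) \<le> Ks s * real k * (gA s A)\<^sup>2" .
    have "(\<integral>\<^sup>+x. ennreal (x powr (2 * s)) * indicator {1 .. \<rho>} x \<partial>lborel) = ennreal ((\<rho> powr p - 1) / p)"
      unfolding p_def by (rule FTC_pow[OF r1]) (use 3 in simp)
    with VS have "(\<integral>\<^sup>+\<xi>. ennreal (wt s \<xi>) * indicator {- \<rho> .. \<rho>} \<xi> \<partial>lborel) \<le> ennreal (2 + 2 * ((\<rho> powr p - 1) / p))"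
      using X0 by (simp only: e22)
    also have "\<dots> \<le> ennreal (Ks s * real k * (gA s A)\<^sup>2)" by (rule ennreal_leI[OF fin])
    finally show ?thesis unfolding \<rho>_def .
  qed
qed


lemma Hs_bound:
  fixes F :: "real \<Rightarrow> complex"
  assumes Fm[measurable]: "F \<in> borel_measurable borel" and Q: "0 \<le> Q"
    and b: "(\<integral>\<^sup>+\<xi>. ennreal (wt s \<xi> * (norm (F \<xi>))\<^sup>2) \<partial>lborel) \<le> ennreal Q"
  shows "in_Hs_hat s F \<and> Hs_norm_hat s F \<le> sqrt Q / sqrt (2 * pi)"
proof -
  have wm: "(\<lambda>\<xi>. wt s \<xi> * (norm (F \<xi>))\<^sup>2) \<in> borel_measurable borel" by measurable
  have nn: "0 \<le> wt s \<xi> * (norm (F \<xi>))\<^sup>2" for \<xi> using wt_pos[of s \<xi>] by simp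
  have int: "integrable lborel (\<lambda>\<xi>. wt s \<xi> * (norm (F \<xi>))\<^sup>2)"
  proof (rule integrableI_bounded)
    show "(\<lambda>\<xi>. wt s \<xi> * (norm (F \<xi>))\<^sup>2) \<in> borel_measurable lborel" using wm by simp
    show "(\<integral>\<^sup>+\<xi>. ennreal (norm (wt s \<xi> * (norm (F \<xi>))\<^sup>2)) \<partial>lborel) < \<infinity>"
      using b nn by (simp add: le_less_trans)
  qed
  have "ennreal (\<integral>\<xi>. wt s \<xi> * (norm (F \<xi>))\<^sup>2 \<partial>lborel) = (\<integral>\<^sup>+\<xi>. ennreal (wt s \<xi> * (norm (F \<xi>))\<^sup>2) \<partial>lborel)"
    using nn by (intro nn_integral_eq_integral[symmetric] int) auto
  then have "ennreal (\<integral>\<xi>. wt s \<xi> * (norm (F \<xi>))\<^sup>2 \<partial>lborel) \<le> ennreal Q" using b by simp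
  then have I: "(\<integral>\<xi>. wt s \<xi> * (norm (F \<xi>))\<^sup>2 \<partial>lborel) \<le> Q" using Q by (simp add: ennreal_le_iff)
  have "in_Hs_hat s F" unfolding in_Hs_hat_def using int by (simp add: wt_def)
  moreover have "Hs_norm_hat s F \<le> sqrt Q / sqrt (2 * pi)"
  proof -
    have "Hs_norm_hat s F = (1 / sqrt (2 * pi)) * sqrt (\<integral>\<xi>. wt s \<xi> * (norm (F \<xi>))\<^sup>2 \<partial>lborel)"
      unfolding Hs_norm_hat_def wt_def by simp
    also have "\<dots> \<le> (1 / sqrt (2 * pi)) * sqrt Q" using I by (intro mult_left_mono) auto
    finally show ?thesis by simp
  qed
  ultimately show ?thesis by blast
qed

context
  fixes \<mu> R N A s :: real
  assumes mu: "\<bar>\<mu>\<bar> = 1" and R: "0 < R" and A2: "2 \<le> A" and AN: "A \<le> N" and s: "s \<le> 0"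
begin

lemma A0: "0 < A" using A2 by simp

lemma U_meas: "Uhat \<mu> (phi_hat R N A) k t \<in> borel_measurable borel"
proof -
  have [measurable]: "case_prod (Uhat \<mu> (phi_hat R N A) k) \<in> borel_measurable (borel \<Otimes>\<^sub>M borel)"
    by (rule Uhat_meas) simp
  show ?thesis by measurable
qed

lemma U1_nn: "(\<integral>\<^sup>+\<xi>. ennreal (wt s \<xi> * (norm (Uhat \<mu> (phi_hat R N A) 1 t \<xi>))\<^sup>2) \<partial>lborel)
    \<le> ennreal ((N/2) powr (2 * s) * (2 * R\<^sup>2) * (2 * A))"
proof -
  define I1 where "I1 = {N - A/2 ..< N + A/2}"
  define I2 where "I2 = {2*N - A/2 ..< 2*N + A/2}"
  have pt: "wt s \<xi> * (norm (Uhat \<mu> (phi_hat R N A) 1 t \<xi>))\<^sup>2 \<le> (N/2) powr (2 * s) * (2 * R\<^sup>2) * (indicator I1 \<xi> + indicator I2 \<xi>)" for \<xi>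
  proof (cases "\<xi> \<in> I1 \<union> I2")
    case True
    have xi: "N/2 \<le> \<bar>\<xi>\<bar>" using True A2 AN unfolding I1_def I2_def by auto
    have "wt s \<xi> \<le> \<bar>\<xi>\<bar> powr (2 * s)" using xi A2 AN by (intro wt_le_pow s) auto
    also have "\<dots> \<le> (N/2) powr (2 * s)" using xi A2 AN s by (intro powr_mono2') auto
    finally have w: "wt s \<xi> \<le> (N/2) powr (2 * s)" .
    have "(norm (Uhat \<mu> (phi_hat R N A) 1 t \<xi>))\<^sup>2 = (R * (indicator I1 \<xi> + indicator I2 \<xi>))\<^sup>2"
      using Uhat_1[of \<mu> "phi_hat R N A" t \<xi>] R by (simp add: norm_mult ph_norm_eq I1_def I2_def)
    also have "\<dots> \<le> 2 * R\<^sup>2 * (indicator I1 \<xi> + indicator I2 \<xi>)"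
      by (auto simp: indicator_def power2_eq_square)
    finally have u: "(norm (Uhat \<mu> (phi_hat R N A) 1 t \<xi>))\<^sup>2 \<le> 2 * R\<^sup>2 * (indicator I1 \<xi> + indicator I2 \<xi>)" .
    show ?thesis using mult_mono[OF w u] wt_pos[of s \<xi>] by (simp add: mult_ac)
  next
    case False
    then have "phi_hat R N A \<xi> = 0" unfolding phi_hat_def I1_def I2_def by (auto simp: indicator_def)
    then show ?thesis using Uhat_1[of \<mu> "phi_hat R N A" t \<xi>] False by simp
  qed
  have "(\<integral>\<^sup>+\<xi>. ennreal (wt s \<xi> * (norm (Uhat \<mu> (phi_hat R N A) 1 t \<xi>))\<^sup>2) \<partial>lborel)
      \<le> (\<integral>\<^sup>+\<xi>. ennreal ((N/2) powr (2 * s) * (2 * R\<^sup>2)) * indicator I1 \<xi> + ennreal ((N/2) powr (2 * s) * (2 * R\<^sup>2)) * indicator I2 \<xi> \<partial>lborel)"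
    by (intro nn_integral_mono order.trans[OF ennreal_leI[OF pt]]) (auto simp: indicator_def ennreal_plus[symmetric] simp del: ennreal_plus)
  also have "\<dots> = ennreal ((N/2) powr (2 * s) * (2 * R\<^sup>2)) * emeasure lborel I1 + ennreal ((N/2) powr (2 * s) * (2 * R\<^sup>2)) * emeasure lborel I2"
    unfolding I1_def I2_def by (subst nn_integral_add) (auto simp: nn_integral_cmult_indicator)
  also have "\<dots> = ennreal ((N/2) powr (2 * s) * (2 * R\<^sup>2) * (2 * A))"
    unfolding I1_def I2_def using A2 by (simp add: ennreal_mult[symmetric] ennreal_plus[symmetric] algebra_simps del: ennreal_plus)
  finally show ?thesis .
qed


lemma Uk_nn:
  assumes k: "1 \<le> k" and t: "0 \<le> t"
  shows "(\<integral>\<^sup>+\<xi>. ennreal (wt s \<xi> * (norm (Uhat \<mu> (phi_hat R N A) k t \<xi>))\<^sup>2) \<partial>lborel)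
    \<le> ennreal ((aB R A k t)\<^sup>2 * (real (4 * k + 1) * (Ks s * real k * (gA s A)\<^sup>2)))"
proof -
  have P: "Pk \<mu> R N A k t" by (rule main_Pk[OF mu R A0 k t])
  have Ub: "norm (Uhat \<mu> (phi_hat R N A) k t \<xi>) \<le> aB R A k t" for \<xi> using P unfolding Pk_def by auto
  have U0: "\<xi> \<notin> Tset N A k \<Longrightarrow> Uhat \<mu> (phi_hat R N A) k t \<xi> = 0" for \<xi> using P unfolding Pk_def by auto
  define a where "a = aB R A k t"
  have Ks0: "0 \<le> Ks s * real k * (gA s A)\<^sup>2"
  proof -
    show ?thesis unfolding Ks_def gA_def using s A2 by (auto intro!: divide_nonneg_pos mult_nonneg_nonneg add_nonneg_nonneg)
  qed
  have pt: "ennreal (wt s \<xi> * (norm (Uhat \<mu> (phi_hat R N A) k t \<xi>))\<^sup>2) \<le> ennreal (a\<^sup>2) * (ennreal (wt s \<xi>) * indicator (Tset N A k) \<xi>)" for \<xi>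
  proof (cases "\<xi> \<in> Tset N A k")
    case True
    have "(norm (Uhat \<mu> (phi_hat R N A) k t \<xi>))\<^sup>2 \<le> a\<^sup>2" unfolding a_def using Ub by (intro power_mono) auto
    then have "wt s \<xi> * (norm (Uhat \<mu> (phi_hat R N A) k t \<xi>))\<^sup>2 \<le> a\<^sup>2 * wt s \<xi>"
      using wt_pos[of s \<xi>] by (simp add: mult.commute mult_left_mono)
    then show ?thesis using True wt_pos[of s \<xi>] by (simp add: ennreal_mult[symmetric] ennreal_leI)
  qed (simp add: U0 del: Uhat.simps)
  have "(\<integral>\<^sup>+\<xi>. ennreal (wt s \<xi> * (norm (Uhat \<mu> (phi_hat R N A) k t \<xi>))\<^sup>2) \<partial>lborel)
      \<le> (\<integral>\<^sup>+\<xi>. ennreal (a\<^sup>2) * (ennreal (wt s \<xi>) * indicator (Tset N A k) \<xi>) \<partial>lborel)"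
    by (intro nn_integral_mono pt)
  also have "\<dots> = ennreal (a\<^sup>2) * (\<integral>\<^sup>+\<xi>. ennreal (wt s \<xi>) * indicator (Tset N A k) \<xi> \<partial>lborel)"
  proof (rule nn_integral_cmult)
    have "Tset N A k \<in> sets borel"
    proof -
      have "Tset N A k = (\<Union>j\<in>{- 2 * int k .. 2 * int k}. {of_int j * N - (real k - 1/2) * A .. of_int j * N + (real k - 1/2) * A})"
        unfolding Tset_def by (auto simp: abs_le_iff intro!: bexI) (auto simp: abs_le_iff)
      then show ?thesis by auto
    qed
    then show "(\<lambda>\<xi>. ennreal (wt s \<xi>) * indicator (Tset N A k) \<xi>) \<in> borel_measurable lborel" by simp
  qed
  also have "\<dots> \<le> ennreal (a\<^sup>2) * (of_nat (4 * k + 1) * ennreal (Ks s * real k * (gA s A)\<^sup>2))"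
    by (intro mult_left_mono order.trans[OF T_bound[OF s A0 k]] mult_left_mono V_bound[OF s A2 k]) auto
  also have "\<dots> = ennreal (a\<^sup>2 * (real (4 * k + 1) * (Ks s * real k * (gA s A)\<^sup>2)))"
    using Ks0 by (simp add: ennreal_mult ennreal_of_nat_eq_real_of_nat)
  finally show ?thesis unfolding a_def .
qed

end


lemma powr_half_pow: "0 \<le> t \<Longrightarrow> 2 \<le> k \<Longrightarrow> t powr ((real k - 1) / 2) = sqrt t ^ (k - 1)"
proof -
  assume t: "0 \<le> t" and k: "2 \<le> k"
  show ?thesis
  proof (cases "t = 0")
    case True then show ?thesis using k by simp
  next
    case False
    then have tp: "0 < t" using t by simp
    have "t powr ((real k - 1) / 2) = (t powr (1/2)) powr (real (k - 1))"
      using k by (simp add: powr_powr of_nat_diff)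
    also have "\<dots> = (t powr (1/2)) ^ (k - 1)" using tp by (simp add: powr_realpow)
    also have "t powr (1/2) = sqrt t" using t by (simp add: powr_half_sqrt)
    finally show ?thesis .
  qed
qed

lemma sqrt_pow_s: "0 < x \<Longrightarrow> sqrt (x powr (2 * s)) = x powr s"
proof -
  assume x: "0 < x"
  have "x powr (2 * s) = (x powr s)\<^sup>2" by (simp add: power2_eq_square powr_add[symmetric])
  then show ?thesis by simp
qed

lemma gA_nonneg: "0 \<le> gA s A" unfolding gA_def by auto

lemma Ks_nonneg: "s \<le> 0 \<Longrightarrow> 0 \<le> Ks s"
  unfolding Ks_def by (auto intro!: add_nonneg_nonneg divide_nonneg_pos)

lemma sqrt2pi: "1 \<le> sqrt (2 * pi)"
  using pi_gt3 by simp

theorem lemma5p7: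
  fixes s :: real
  assumes "s \<le> 0"
  shows "\<exists>C>0. \<forall>\<mu> R A N t. \<mu> \<in> {-1, 1} \<and> R > 0 \<and> 2 \<le> A \<and> A \<le> N \<and> t \<ge> 0 \<longrightarrow>
     (in_Hs_hat s (Uhat \<mu> (phi_hat R N A) 1 t) \<and>
      Hs_norm_hat s (Uhat \<mu> (phi_hat R N A) 1 t) \<le> C * R * A powr (1/2) * N powr s) \<and>
     (\<forall>k\<ge>2. in_Hs_hat s (Uhat \<mu> (phi_hat R N A) k t) \<and>
      Hs_norm_hat s (Uhat \<mu> (phi_hat R N A) k t)
        \<le> t powr ((real k - 1) / 2) * (C * R * A) ^ (k - 1) * R * gA s A)"
proof -
  have s: "s \<le> 0" by fact
  define M where "M = max 1 (2 * sqrt (5 * Ks s))"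
  define C where "C = max (2 * 2 powr (- s)) (4 * M)"
  have M1: "1 \<le> M" unfolding M_def by simp
  have MK: "2 * sqrt (5 * Ks s) \<le> M" unfolding M_def by simp
  have C1: "2 * 2 powr (- s) \<le> C" unfolding C_def by simp
  have C2: "4 * M \<le> C" unfolding C_def by simp
  have Cpos: "0 < C" using C2 M1 by simp
  show ?thesis
  proof (intro exI[of _ C] conjI[OF Cpos] allI impI)
    fix \<mu> R A N t :: real
    assume h: "\<mu> \<in> {-1, 1} \<and> R > 0 \<and> 2 \<le> A \<and> A \<le> N \<and> t \<ge> 0"
    then have mu: "\<bar>\<mu>\<bar> = 1" and R: "0 < R" and A2: "2 \<le> A" and AN: "A \<le> N" and t: "0 \<le> t" by auto
    have A0: "0 < A" and N0: "0 < N" using A2 AN by auto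
    show "(in_Hs_hat s (Uhat \<mu> (phi_hat R N A) 1 t) \<and>
      Hs_norm_hat s (Uhat \<mu> (phi_hat R N A) 1 t) \<le> C * R * A powr (1/2) * N powr s) \<and>
     (\<forall>k\<ge>2. in_Hs_hat s (Uhat \<mu> (phi_hat R N A) k t) \<and>
      Hs_norm_hat s (Uhat \<mu> (phi_hat R N A) k t)
        \<le> t powr ((real k - 1) / 2) * (C * R * A) ^ (k - 1) * R * gA s A)"
    proof (intro conjI allI impI)
      define Q where "Q = (N/2) powr (2 * s) * (2 * R\<^sup>2) * (2 * A)"
      have Q0: "0 \<le> Q" unfolding Q_def using R A0 by simp
      have HB: "in_Hs_hat s (Uhat \<mu> (phi_hat R N A) 1 t) \<and> Hs_norm_hat s (Uhat \<mu> (phi_hat R N A) 1 t) \<le> sqrt Q / sqrt (2 * pi)"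
        by (rule Hs_bound[OF U_meas[OF mu R A2 AN s] Q0]) (unfold Q_def, rule U1_nn[OF mu R A2 AN s])
      then show "in_Hs_hat s (Uhat \<mu> (phi_hat R N A) 1 t)" by blast
      have sQ: "sqrt Q = 2 * 2 powr (- s) * R * A powr (1/2) * N powr s"
      proof -
        have "sqrt Q = sqrt ((N/2) powr (2 * s)) * sqrt (4 * R\<^sup>2 * A)"
          unfolding Q_def by (simp add: real_sqrt_mult mult_ac)
        also have "sqrt ((N/2) powr (2 * s)) = (N/2) powr s" using N0 by (intro sqrt_pow_s) simp
        also have "(N/2) powr s = N powr s * 2 powr (- s)" using N0 by (simp add: powr_divide powr_minus_divide)
        also have "sqrt (4 * R\<^sup>2 * A) = 2 * R * A powr (1/2)" using R A0 by (simp add: real_sqrt_mult powr_half_sqrt)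
        finally show ?thesis by (simp add: mult_ac)
      qed
      have "Hs_norm_hat s (Uhat \<mu> (phi_hat R N A) 1 t) \<le> sqrt Q / sqrt (2 * pi)" using HB by blast
      also have "\<dots> \<le> sqrt Q" using sqrt2pi Q0 by (simp add: divide_le_eq mult_le_cancel_left1 order.trans[of _ "sqrt Q * 1"])
      also have "\<dots> \<le> C * R * A powr (1/2) * N powr s"
        unfolding sQ using C1 R by (intro mult_right_mono) auto
      finally show "Hs_norm_hat s (Uhat \<mu> (phi_hat R N A) 1 t) \<le> C * R * A powr (1/2) * N powr s" .
    next
      fix k :: nat assume k2: "2 \<le> k"
      then have k1: "1 \<le> k" by simp
      define Y where "Y = real (4 * k + 1) * (Ks s * real k * (gA s A)\<^sup>2)"
      define a where "a = aB R A k t"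
      have a0: "0 \<le> a" unfolding a_def using R A0 t by (intro aB_nonneg) auto
      have Y0: "0 \<le> Y" unfolding Y_def using Ks_nonneg[OF s] by simp
      define Q where "Q = a\<^sup>2 * Y"
      have Q0: "0 \<le> Q" unfolding Q_def using Y0 by simp
      have HB: "in_Hs_hat s (Uhat \<mu> (phi_hat R N A) k t) \<and> Hs_norm_hat s (Uhat \<mu> (phi_hat R N A) k t) \<le> sqrt Q / sqrt (2 * pi)"
        by (rule Hs_bound[OF U_meas[OF mu R A2 AN s] Q0]) (unfold Q_def Y_def a_def, rule Uk_nn[OF mu R A2 AN s k1 t])
      then show "in_Hs_hat s (Uhat \<mu> (phi_hat R N A) k t)" by blast
      define X where "X = R^k * A^(k-1) * sqrt t^(k-1) * gA s A"
      have X0: "0 \<le> X" unfolding X_def using R A0 t gA_nonneg[of s A] by simp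
      have sQ: "sqrt Q = wk k * sqrt (real (4 * k + 1) * (Ks s * real k)) * X"
      proof -
        have "sqrt Q = a * sqrt (real (4 * k + 1) * (Ks s * real k)) * gA s A"
          unfolding Q_def Y_def using a0 gA_nonneg[of s A] by (simp add: real_sqrt_mult mult_ac)
        then show ?thesis unfolding a_def aB_def X_def by (simp add: mult_ac)
      qed
      have ws: "wk k * sqrt (real (4 * k + 1) * (Ks s * real k)) \<le> 4^(k-1) * M"
      proof -
        have Ks0: "0 \<le> Ks s" by (rule Ks_nonneg[OF s])
        have kk: "real k * 1 \<le> real k * real k" using k1 by (intro mult_left_mono) auto
        have kk': "Ks s * real k \<le> Ks s * (real k * real k)" using kk Ks0 by (intro mult_left_mono) auto
        have e1: "real (4 * k + 1) * (Ks s * real k) = 4 * (Ks s * (real k * real k)) + Ks s * real k"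
          by (simp add: algebra_simps)
        have e2: "(real k)\<^sup>2 * (5 * Ks s) = 5 * (Ks s * (real k * real k))"
          by (simp add: power2_eq_square algebra_simps)
        have "real (4 * k + 1) * (Ks s * real k) \<le> (real k)\<^sup>2 * (5 * Ks s)"
          unfolding e1 e2 using kk' by linarith
        then have "sqrt (real (4 * k + 1) * (Ks s * real k)) \<le> real k * sqrt (5 * Ks s)"
          by (metis real_sqrt_le_mono real_sqrt_mult real_sqrt_abs abs_of_nat)
        then have "wk k * sqrt (real (4 * k + 1) * (Ks s * real k)) \<le> wk k * (real k * sqrt (5 * Ks s))"
          by (intro mult_left_mono wk_nonneg)
        also have "\<dots> = 4^(k-1) * (2 * sqrt (5 * Ks s)) / real k"
          unfolding wk_def using k1 by (simp add: power2_eq_square field_simps)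
        also have "\<dots> \<le> 4^(k-1) * (2 * sqrt (5 * Ks s)) / 1"
          by (rule divide_left_mono) (use k1 Ks0 in auto)
        also have "\<dots> \<le> 4^(k-1) * M" using MK by simp
        finally show ?thesis .
      qed
      have MC: "(4::real)^(k-1) * M \<le> C^(k-1)"
      proof -
        have "M \<le> M^(k-1)" using M1 k2 by (simp add: power_increasing[of 1 "k-1" M, simplified])
        then have "(4::real)^(k-1) * M \<le> 4^(k-1) * M^(k-1)" by simp
        also have "\<dots> = (4 * M)^(k-1)" by (simp add: power_mult_distrib)
        also have "\<dots> \<le> C^(k-1)" using C2 M1 by (intro power_mono) auto
        finally show ?thesis .
      qed
      have "Hs_norm_hat s (Uhat \<mu> (phi_hat R N A) k t) \<le> sqrt Q / sqrt (2 * pi)" using HB by blast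
      also have "\<dots> \<le> sqrt Q" using sqrt2pi Q0 by (simp add: divide_le_eq mult_le_cancel_left1 order.trans[of _ "sqrt Q * 1"])
      also have "\<dots> \<le> C^(k-1) * X"
        unfolding sQ using ws MC X0 by (intro mult_right_mono) auto
      also have "\<dots> = t powr ((real k - 1) / 2) * (C * R * A) ^ (k - 1) * R * gA s A"
      proof -
        have "R^k = R^(k-1) * R" using k1 by (metis power_minus_mult less_le_trans zero_less_one)
        then show ?thesis unfolding X_def powr_half_pow[OF t k2] by (simp add: power_mult_distrib mult_ac)
      qed
      finally show "Hs_norm_hat s (Uhat \<mu> (phi_hat R N A) k t) \<le> t powr ((real k - 1) / 2) * (C * R * A) ^ (k - 1) * R * gA s A" .
    qed
  qed
qed


end
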